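(* A generic $(2,3)$-hypersurface of type $(\tau)$, i.e. $\{a_1x_1^2y_0^2y_1+a_2x_0x_1y_0y_1y_2+a_3x_0^2y_1y_2^2=0\}$, and the hypersurface of type $(\tau')$, i.e. $\{x_0x_1y_0y_1y_2=0\}$, are semistable with closed orbit.
   Context: Coordinates $(x_0,x_1;y_0,y_1,y_2)$ on $\mathbb{P}^1\times\mathbb{P}^2$; (semi)stability and closedness of orbits refer to GIT for the natural action of $\mathrm{SL}_2\times\mathrm{SL}_3$ on $\mathbb{P}(H^0(\mathcal{O}(2,3)))$ (closed orbit meaning closed in the semistable locus). "Generic" refers to general constants $a_1,a_2,a_3$. *)

theory Defs
  imports "HOL-Analysis.Analysis"
begin

text \<open>Bihomogeneous forms of bidegree (2,3) on P^1 x P^2, viewed as polynomial functions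
  F x y with x = (x0,x1) = (x$1, x$2) and y = (y0,y1,y2) = (y$1, y$2, y$3).\<close>

type_synonym form = "complex^2 \<Rightarrow> complex^3 \<Rightarrow> complex"

definition form23 :: "form \<Rightarrow> bool" where
  "form23 F \<longleftrightarrow> (\<exists>c::nat \<Rightarrow> nat \<Rightarrow> nat \<Rightarrow> complex.
     F = (\<lambda>x y. \<Sum>i\<le>2. \<Sum>a\<le>3. \<Sum>b\<le>3 - a.
            c i a b * x$1 ^ i * x$2 ^ (2 - i) * y$1 ^ a * y$2 ^ b * y$3 ^ (3 - a - b)))"

text \<open>Action of (A,B) in SL2 x SL3 (by substitution; the orbit is the same set as for the
  contragredient action since SL is a group).\<close>
definition act :: "complex^2^2 \<Rightarrow> complex^3^3 \<Rightarrow> form \<Rightarrow> form" where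
  "act A B F = (\<lambda>x y. F (A *v x) (B *v y))"

definition SL_orbit :: "form \<Rightarrow> form set" where
  "SL_orbit F = {act A B F | A B. det A = 1 \<and> det B = 1}"

text \<open>Cone over the orbit of [F] in P(V): all nonzero multiples of orbit points.\<close>
definition cone_orbit :: "form \<Rightarrow> form set" where
  "cone_orbit F = {(\<lambda>x y. t * G x y) | t G. t \<noteq> 0 \<and> G \<in> SL_orbit F}"

text \<open>Euclidean closure in the finite-dimensional space V; on V pointwise convergence of the
  polynomial functions coincides with convergence of coefficients.\<close>
definition in_closure :: "form \<Rightarrow> form set \<Rightarrow> bool" where
  "in_closure H S \<longleftrightarrow> (\<exists>s::nat \<Rightarrow> form. (\<forall>n. s n \<in> S) \<and>
      (\<forall>x y. (\<lambda>n. s n x y) \<longlonglongrightarrow> H x y))"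

definition semistable :: "form \<Rightarrow> bool" where
  "semistable F \<longleftrightarrow> form23 F \<and> F \<noteq> (\<lambda>x y. 0) \<and> \<not> in_closure (\<lambda>x y. 0) (SL_orbit F)"

text \<open>The orbit of [F] is closed in the semistable locus of P(V): since V-{0} -> P(V) is an open
  quotient map, this says every semistable H in the closure of the cone over the orbit lies in it.\<close>
definition closed_orbit :: "form \<Rightarrow> bool" where
  "closed_orbit F \<longleftrightarrow> (\<forall>H. semistable H \<and> in_closure H (cone_orbit F) \<longrightarrow> H \<in> cone_orbit F)"

definition generic3 :: "(complex \<Rightarrow> complex \<Rightarrow> complex \<Rightarrow> bool) \<Rightarrow> bool" where
  "generic3 P \<longleftrightarrow> (\<exists>(p::nat \<Rightarrow> nat \<Rightarrow> nat \<Rightarrow> complex) N.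
     (\<exists>i j k. p i j k \<noteq> 0) \<and> (\<forall>i j k. p i j k \<noteq> 0 \<longrightarrow> i \<le> N \<and> j \<le> N \<and> k \<le> N) \<and>
     (\<forall>a1 a2 a3. (\<Sum>i\<le>N. \<Sum>j\<le>N. \<Sum>k\<le>N. p i j k * a1 ^ i * a2 ^ j * a3 ^ k) \<noteq> 0
        \<longrightarrow> P a1 a2 a3))"

definition tau :: "complex \<Rightarrow> complex \<Rightarrow> complex \<Rightarrow> form" where
  "tau a1 a2 a3 = (\<lambda>x y. a1 * x$2^2 * y$1^2 * y$2 + a2 * x$1 * x$2 * y$1 * y$2 * y$3
                        + a3 * x$1^2 * y$2 * y$3^2)"

definition tau' :: form where
  "tau' = (\<lambda>x y. x$1 * x$2 * y$1 * y$2 * y$3)"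

end

theory Submission imports Defs begin
definition dotv :: "complex^'n \<Rightarrow> complex^'n \<Rightarrow> complex" where
  "dotv u x = (\<Sum>i\<in>UNIV. u$i * x$i)"

definition bil :: "complex^3^2 \<Rightarrow> complex^2 \<Rightarrow> complex^3 \<Rightarrow> complex" where
  "bil N x y = (\<Sum>j\<in>UNIV. \<Sum>l\<in>UNIV. x$j * N$j$l * y$l)"

definition FF :: "complex \<Rightarrow> complex \<Rightarrow> complex \<Rightarrow> complex \<Rightarrow> form" where
  "FF al be ga de = (\<lambda>x y. y$2 * (al*x$2*y$1 + be*x$1*y$3) * (ga*x$2*y$1 + de*x$1*y$3))"

definition ss :: "form \<Rightarrow> bool" where
  "ss H \<longleftrightarrow> \<not> in_closure (\<lambda>x y. 0) (SL_orbit H)"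

lemma dotv2: "dotv (u::complex^2) x = u$1*x$1 + u$2*x$2"
  by (simp add: dotv_def sum_2)
lemma dotv3: "dotv (u::complex^3) x = u$1*x$1 + u$2*x$2 + u$3*x$3"
  by (simp add: dotv_def sum_3)
lemma bil_expand: "bil N x y = x$1*N$1$1*y$1 + x$1*N$1$2*y$2 + x$1*N$1$3*y$3
   + x$2*N$2$1*y$1 + x$2*N$2$2*y$2 + x$2*N$2$3*y$3"
  by (simp add: bil_def sum_2 sum_3 algebra_simps)

lemma mv2: "((A::complex^2^2) *v x)$i = A$i$1*x$1 + A$i$2*x$2"
  by (simp add: matrix_vector_mult_def sum_2)
lemma mv3: "((A::complex^3^3) *v x)$i = A$i$1*x$1 + A$i$2*x$2 + A$i$3*x$3"
  by (simp add: matrix_vector_mult_def sum_3)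

lemma act_act: "act A B (act A' B' G) = act (A' ** A) (B' ** B) G"
  by (simp add: act_def matrix_vector_mul_assoc)

lemma act_id: "act (mat 1) (mat 1) G = G"
  by (simp add: act_def)

lemma SL_orbit_trans:
  assumes "G \<in> SL_orbit H" shows "SL_orbit G \<subseteq> SL_orbit H"
proof
  fix K assume "K \<in> SL_orbit G"
  then obtain A B where K: "K = act A B G" "det A = 1" "det B = 1" by (auto simp: SL_orbit_def)
  from assms obtain A' B' where G: "G = act A' B' H" "det A' = 1" "det B' = 1" by (auto simp: SL_orbit_def)
  have "K = act (A' ** A) (B' ** B) H" using K G by (simp add: act_act)
  moreover have "det (A' ** A) = 1" "det (B' ** B) = 1" using K G by (simp_all add: det_mul)
  ultimately show "K \<in> SL_orbit H" unfolding SL_orbit_def by blast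
qed

lemma ss_act:
  assumes "ss H" "det A = 1" "det B = 1" shows "ss (act A B H)"
proof -
  have "act A B H \<in> SL_orbit H" using assms unfolding SL_orbit_def by blast
  hence sub: "SL_orbit (act A B H) \<subseteq> SL_orbit H" by (rule SL_orbit_trans)
  show ?thesis using assms(1) sub unfolding ss_def in_closure_def by blast
qed

lemma not_ss_seq:
  assumes "\<And>k. det (As k) = 1" "\<And>k. det (Bs k) = 1"
    and "\<And>x y. (\<lambda>k. H (As k *v x) (Bs k *v y)) \<longlonglongrightarrow> 0"
  shows "\<not> ss H"
proof -
  have "\<forall>k. act (As k) (Bs k) H \<in> SL_orbit H" using assms unfolding SL_orbit_def by blast
  moreover have "\<forall>x y. (\<lambda>k. act (As k) (Bs k) H x y) \<longlonglongrightarrow> 0"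
    using assms(3) by (simp add: act_def)
  ultimately show ?thesis unfolding ss_def in_closure_def
    by (auto intro!: exI[of _ "\<lambda>k. act (As k) (Bs k) H"])
qed

lemma not_ss_zero: "\<not> ss (\<lambda>x y. 0)"
proof -
  have "(\<lambda>x y. 0) \<in> SL_orbit (\<lambda>x y. 0)"
    unfolding SL_orbit_def act_def by (rule CollectI, rule exI[of _ "mat 1"], rule exI[of _ "mat 1"]) simp
  thus ?thesis unfolding ss_def in_closure_def by (intro notI) (auto intro!: exI[of _ "\<lambda>n. (\<lambda>x y. 0)"])
qed

lemma cone_act:
  assumes "G \<in> cone_orbit F" "det A = 1" "det B = 1" shows "act A B G \<in> cone_orbit F"
proof -
  from assms(1) obtain t K where tK: "G = (\<lambda>x y. t * K x y)" "t \<noteq> 0" "K \<in> SL_orbit F"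
    by (auto simp: cone_orbit_def)
  have "act A B K \<in> SL_orbit F" using SL_orbit_trans[OF tK(3)] assms unfolding SL_orbit_def by blast
  moreover have "act A B G = (\<lambda>x y. t * act A B K x y)" using tK by (simp add: act_def)
  ultimately show ?thesis using tK(2) unfolding cone_orbit_def by blast
qed

definition adj2 :: "complex^2^2 \<Rightarrow> complex^2^2" where
  "adj2 A = vector [vector [A$2$2, - A$1$2], vector [- A$2$1, A$1$1]]"
definition adj3 :: "complex^3^3 \<Rightarrow> complex^3^3" where
  "adj3 A = vector [
     vector [A$2$2*A$3$3 - A$2$3*A$3$2, A$1$3*A$3$2 - A$1$2*A$3$3, A$1$2*A$2$3 - A$1$3*A$2$2],
     vector [A$2$3*A$3$1 - A$2$1*A$3$3, A$1$1*A$3$3 - A$1$3*A$3$1, A$1$3*A$2$1 - A$1$1*A$2$3],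
     vector [A$2$1*A$3$2 - A$2$2*A$3$1, A$1$2*A$3$1 - A$1$1*A$3$2, A$1$1*A$2$2 - A$1$2*A$2$1]]"

lemma adj2_mul: "A ** adj2 A = mat 1" if "det A = 1" for A :: "complex^2^2"
  using that unfolding adj2_def
  by (simp add: vec_eq_iff forall_2 matrix_matrix_mult_def sum_2 det_2 mat_def algebra_simps)
lemma adj3_mul: "A ** adj3 A = mat 1" if "det A = 1" for A :: "complex^3^3"
  using that unfolding adj3_def
  by (simp add: vec_eq_iff forall_3 matrix_matrix_mult_def sum_3 det_3 mat_def algebra_simps)
lemma adj2_det: "det (adj2 A) = 1" if "det A = 1" for A :: "complex^2^2"
  using that unfolding adj2_def by (simp add: det_2 algebra_simps)
lemma adj3_det: "det (adj3 A) = 1" if "det A = 1" for A :: "complex^3^3"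
proof -
  have "det (A ** adj3 A) = 1" using adj3_mul[OF that] by simp
  thus ?thesis using that by (simp add: det_mul)
qed

lemma cone_act_back:
  assumes "act A B G \<in> cone_orbit F" "det A = 1" "det B = 1" shows "G \<in> cone_orbit F"
proof -
  have "act (adj2 A) (adj3 B) (act A B G) \<in> cone_orbit F"
    using cone_act[OF assms(1)] assms by (simp add: adj2_det adj3_det)
  thus ?thesis using assms by (simp add: act_act adj2_mul adj3_mul act_id)
qed

lemma norm_le_rows: "norm (M::'a::real_normed_vector^'n) \<le> (\<Sum>i\<in>UNIV. norm (M$i))"
  unfolding norm_vec_def by (rule L2_set_le_sum) simp

lemma ex_nonroot3:
  fixes p1 p2 p3 :: "complex poly"
  assumes "p1 \<noteq> 0" "p2 \<noteq> 0" "p3 \<noteq> 0"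
  shows "\<exists>t. poly p1 t \<noteq> 0 \<and> poly p2 t \<noteq> 0 \<and> poly p3 t \<noteq> 0"
proof -
  have "p1 * p2 * p3 \<noteq> 0" using assms by simp
  hence "finite {t. poly (p1*p2*p3) t = 0}" by (rule poly_roots_finite)
  then obtain t where "t \<notin> {t. poly (p1*p2*p3) t = 0}"
    using ex_new_if_finite[OF infinite_UNIV_char_0] by blast
  thus ?thesis by auto
qed

definition yc :: "complex \<Rightarrow> complex^3" where "yc t = vector [1, t^2, t^4]"
definition xc :: "complex \<Rightarrow> complex^2" where "xc t = vector [1, t]"

lemma dotv_yc: "dotv m (yc t) = poly [:m$1, 0, m$2, 0, m$3:] t"
  by (simp add: dotv3 yc_def algebra_simps power2_eq_square power4_eq_xxxx)

lemma bil_xyc: "bil N (xc t) (yc t) = poly [:N$1$1, N$2$1, N$1$2, N$2$2, N$1$3, N$2$3:] t"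
  by (simp add: bil_expand xc_def yc_def algebra_simps power2_eq_square power4_eq_xxxx)

lemma vec3_nz: "(m::complex^3) \<noteq> 0 \<Longrightarrow> [:m$1, 0, m$2, 0, m$3:] \<noteq> 0"
  by (auto simp: vec_eq_iff forall_3)

lemma mat32_nz: "(N::complex^3^2) \<noteq> 0 \<Longrightarrow> [:N$1$1, N$2$1, N$1$2, N$2$2, N$1$3, N$2$3:] \<noteq> 0"
  by (auto simp: vec_eq_iff forall_3 forall_2)

lemma NV3:
  assumes "(a::complex^3) \<noteq> 0" "b \<noteq> 0" "c \<noteq> 0"
  shows "\<exists>y. dotv a y * dotv b y * dotv c y \<noteq> 0"
proof -
  obtain t where "poly [:a$1, 0, a$2, 0, a$3:] t \<noteq> 0" "poly [:b$1, 0, b$2, 0, b$3:] t \<noteq> 0"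
     "poly [:c$1, 0, c$2, 0, c$3:] t \<noteq> 0"
    using ex_nonroot3[OF vec3_nz[OF assms(1)] vec3_nz[OF assms(2)] vec3_nz[OF assms(3)]] by blast
  thus ?thesis by (intro exI[of _ "yc t"]) (simp add: dotv_yc)
qed

lemma NVB:
  assumes "(m::complex^3) \<noteq> 0" "N1 \<noteq> 0" "N2 \<noteq> 0"
  shows "\<exists>x y. dotv m y * bil N1 x y * bil N2 x y \<noteq> 0"
proof -
  obtain t where "poly [:m$1, 0, m$2, 0, m$3:] t \<noteq> 0"
     "poly [:N1$1$1, N1$2$1, N1$1$2, N1$2$2, N1$1$3, N1$2$3:] t \<noteq> 0"
     "poly [:N2$1$1, N2$2$1, N2$1$2, N2$2$2, N2$1$3, N2$2$3:] t \<noteq> 0"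
    using ex_nonroot3[OF vec3_nz[OF assms(1)] mat32_nz[OF assms(2)] mat32_nz[OF assms(3)]] by blast
  thus ?thesis by (intro exI[of _ "xc t"] exI[of _ "yc t"]) (simp add: dotv_yc bil_xyc)
qed

lemma tendsto_mv3:
  assumes "f \<longlonglongrightarrow> (L::complex^3^3)" shows "(\<lambda>n. f n *v y) \<longlonglongrightarrow> L *v y"
  apply (rule vec_tendstoI)
  unfolding mv3
  by (intro tendsto_intros tendsto_vec_nth assms)

lemma tendsto_det3:
  assumes "f \<longlonglongrightarrow> (L::complex^3^3)" shows "(\<lambda>n. det (f n)) \<longlonglongrightarrow> det L"
  unfolding det_3
  by (intro tendsto_intros tendsto_vec_nth assms)

definition T3 :: "complex^3 \<Rightarrow> complex" where "T3 u = u$1*u$2*u$3"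

lemma det3_row_nz: "det (B::complex^3^3) \<noteq> 0 \<Longrightarrow> B$i \<noteq> 0"
  using exhaust_3[of i] by (auto simp: det_3)

lemma TL:
  assumes det1: "\<And>n. det (Bs n) = 1"
    and lim: "\<And>y. (\<lambda>n. T3 (Bs n *v y)) \<longlonglongrightarrow> 0"
  shows False
proof -
  define nb where "nb i n = norm (Bs n $ i)" for i n
  have nbpos: "nb i n > 0" for i n
    using det3_row_nz[of "Bs n" i] det1[of n] by (simp add: nb_def)
  define bh where "bh n = (\<chi> i. (1 / nb i n) *\<^sub>R (Bs n $ i))" for n
  have rowsn: "norm (bh n $ i) = 1" for n i
    using nbpos[of i n] by (simp add: bh_def nb_def)
  have "norm (bh n) \<le> 3" for n
  proof -
    have "norm (bh n) \<le> (\<Sum>i\<in>UNIV. norm (bh n $ i))" by (rule norm_le_rows)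
    also have "\<dots> = 3" by (simp add: rowsn sum_3)
    finally show ?thesis .
  qed
  hence "bounded (range bh)" unfolding bounded_iff by blast
  then obtain L r where r: "strict_mono r" and conv: "(bh \<circ> r) \<longlonglongrightarrow> L"
    using bounded_imp_convergent_subsequence by blast
  have Lrow: "norm (L $ i) = 1" for i
  proof -
    have "(\<lambda>n. norm ((bh \<circ> r) n $ i)) \<longlonglongrightarrow> norm (L $ i)"
      by (intro tendsto_intros tendsto_vec_nth conv)
    moreover have "(\<lambda>n. norm ((bh \<circ> r) n $ i)) = (\<lambda>n. 1)" by (simp add: rowsn)
    ultimately show ?thesis using LIMSEQ_unique tendsto_const by metis
  qed
  hence Lnz: "L $ i \<noteq> 0" for i by (metis norm_zero zero_neq_one)
  obtain y where y: "dotv (L$1) y * dotv (L$2) y * dotv (L$3) y \<noteq> 0"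
    using NV3[OF Lnz Lnz Lnz] by blast
  have bhe: "bh n $ i $ j = of_real (1 / nb i n) * Bs n $ i $ j" for n i j
  proof -
    have "bh n $ i $ j = (1 / nb i n) *\<^sub>R (Bs n $ i $ j)" by (simp add: bh_def)
    thus ?thesis by (simp only: scaleR_conv_of_real)
  qed
  have bhv: "(bh n *v y) $ i = (1 / nb i n) * (Bs n *v y) $ i" for n i
    by (simp add: bhe matrix_vector_mult_def sum_distrib_left mult.assoc)
  have dbh: "det (bh n) = (1 / nb 1 n) * (1 / nb 2 n) * (1 / nb 3 n)" for n
  proof -
    have "det (bh n) = (1 / nb 1 n) * (1 / nb 2 n) * (1 / nb 3 n) * det (Bs n)"
      unfolding det_3 bhe by (simp add: algebra_simps)
    thus ?thesis using det1 by simp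
  qed
  have key: "T3 (bh n *v y) = det (bh n) * T3 (Bs n *v y)" for n
    by (simp add: T3_def bhv dbh)
  have l1: "(\<lambda>n. T3 ((bh \<circ> r) n *v y)) \<longlonglongrightarrow> T3 (L *v y)"
    unfolding T3_def by (intro tendsto_intros tendsto_vec_nth tendsto_mv3 conv)
  have l2: "(\<lambda>n. det ((bh \<circ> r) n) * T3 (Bs (r n) *v y)) \<longlonglongrightarrow> det L * 0"
    apply (intro tendsto_intros tendsto_det3 conv)
    using LIMSEQ_subseq_LIMSEQ[OF lim r] by (simp add: o_def)
  have "T3 (L *v y) = 0"
    using LIMSEQ_unique[OF l1] l2 key by (simp add: o_def)
  moreover have "T3 (L *v y) = dotv (L$1) y * dotv (L$2) y * dotv (L$3) y"
    by (simp add: T3_def matrix_vector_mult_def dotv_def)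
  ultimately show False using y by simp
qed

definition Dd :: "form \<Rightarrow> complex^3 \<Rightarrow> complex" where
  "Dd G y = (G (vector [1,1]) y - G (vector [1,0]) y - G (vector [0,1]) y)^2
            - 4 * G (vector [1,0]) y * G (vector [0,1]) y"

lemma Dd_FF:
  assumes "det A = 1"
  shows "Dd (act A B (FF al be ga de)) y = (al*de-be*ga)^2 * (T3 (B *v y))^2"
proof -
  have "Dd (act A B (FF al be ga de)) y =
     (A$1$1*A$2$2 - A$1$2*A$2$1)^2 * (al*de-be*ga)^2 * (T3 (B *v y))^2"
    unfolding Dd_def act_def FF_def T3_def mv2
    by simp algebra
  thus ?thesis using assms by (simp add: det_2)
qed

lemma sq_tendsto_zero:
  assumes "(\<lambda>n. (f n::complex)^2) \<longlonglongrightarrow> 0" shows "f \<longlonglongrightarrow> 0"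
proof -
  have "(\<lambda>n. norm ((f n)^2)) \<longlonglongrightarrow> 0" using assms by (rule tendsto_norm_zero)
  hence "(\<lambda>n. sqrt (norm ((f n)^2))) \<longlonglongrightarrow> sqrt 0" by (rule tendsto_real_sqrt)
  moreover have "sqrt (norm ((f n)^2)) = norm (f n)" for n
    by (simp add: norm_power)
  ultimately have "(\<lambda>n. norm (f n)) \<longlonglongrightarrow> 0" by simp
  thus ?thesis by (rule tendsto_norm_zero_cancel)
qed

lemma ss_FF:
  assumes "al*de - be*ga \<noteq> 0" shows "ss (FF al be ga de)"
proof (rule ccontr)
  assume "\<not> ss (FF al be ga de)"
  then obtain s where s: "\<And>n. s n \<in> SL_orbit (FF al be ga de)" "\<And>x y. (\<lambda>n. s n x y) \<longlonglongrightarrow> 0"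
    unfolding ss_def in_closure_def by blast
  have "\<forall>n. \<exists>A B. s n = act A B (FF al be ga de) \<and> det A = 1 \<and> det B = 1"
    using s(1) unfolding SL_orbit_def by blast
  then obtain As Bs where AB: "\<And>n. s n = act (As n) (Bs n) (FF al be ga de)"
     "\<And>n. det (As n) = 1" "\<And>n. det (Bs n) = 1" by metis
  have "(\<lambda>n. T3 (Bs n *v y)) \<longlonglongrightarrow> 0" for y
  proof -
    have "(\<lambda>n. Dd (s n) y) \<longlonglongrightarrow> (0-0-0)^2 - 4*0*0"
      unfolding Dd_def by (intro tendsto_intros s(2))
    hence "(\<lambda>n. (al*de-be*ga)^2 * (T3 (Bs n *v y))^2) \<longlonglongrightarrow> 0"
      by (simp add: AB Dd_FF)
    hence "(\<lambda>n. inverse ((al*de-be*ga)^2) * ((al*de-be*ga)^2 * (T3 (Bs n *v y))^2)) \<longlonglongrightarrow> inverse ((al*de-be*ga)^2) * 0"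
      by (intro tendsto_intros)
    hence "(\<lambda>n. (T3 (Bs n *v y))^2) \<longlonglongrightarrow> 0" using assms by simp
    thus ?thesis by (rule sq_tendsto_zero)
  qed
  thus False using TL AB(3) by blast
qed

definition Nmat :: "complex \<Rightarrow> complex \<Rightarrow> complex^2^2 \<Rightarrow> complex^3^3 \<Rightarrow> complex^3^2" where
  "Nmat al be A B = (\<chi> j l. al * A$2$j * B$1$l + be * A$1$j * B$3$l)"

lemma E_Nmat: "al*(A *v x)$2*(B *v y)$1 + be*(A *v x)$1*(B *v y)$3 = bil (Nmat al be A B) x y"
  unfolding bil_expand Nmat_def mv2 mv3 by simp algebra

definition crs :: "complex^3 \<Rightarrow> complex^3 \<Rightarrow> complex^3" where
  "crs u w = vector [u$2 * w$3 - u$3 * w$2, u$3 * w$1 - u$1 * w$3, u$1 * w$2 - u$2 * w$1]"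

definition crossrows :: "complex^3^2 \<Rightarrow> complex^3" where "crossrows N = crs (N$1) (N$2)"
definition mixrows :: "complex^3^2 \<Rightarrow> complex^3^2 \<Rightarrow> complex^3" where
  "mixrows N1 N2 = crs (N1$1) (N2$2) + crs (N2$1) (N1$2)"

lemma crossrows_Nmat: "crossrows (Nmat al be A B) = (al*be*(- det A)) *s crs (B$1) (B$3)"
  unfolding vec_eq_iff forall_3 crossrows_def crs_def Nmat_def det_2
  by (simp add: algebra_simps)

lemma mixrows_Nmat: "mixrows (Nmat al be A B) (Nmat ga de A B) = ((al*de+be*ga)*(- det A)) *s crs (B$1) (B$3)"
  unfolding vec_eq_iff forall_3 mixrows_def crs_def Nmat_def det_2
  by (simp add: algebra_simps)

lemma scaleR_entry: "(r *\<^sub>R (N::complex^'m^'n)) $ j $ l = of_real r * N$j$l"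
proof -
  have "(r *\<^sub>R N) $ j $ l = r *\<^sub>R (N$j$l)" by simp
  thus ?thesis by (simp only: scaleR_conv_of_real)
qed

lemma scaleR_entry1: "(r *\<^sub>R (v::complex^'n)) $ j = of_real r * v$j"
proof -
  have "(r *\<^sub>R v) $ j = r *\<^sub>R (v$j)" by simp
  thus ?thesis by (simp only: scaleR_conv_of_real)
qed

lemma crossrows_scaleR: "crossrows (r *\<^sub>R N) = (of_real r)^2 *s crossrows N"
  unfolding vec_eq_iff forall_3 crossrows_def crs_def
  by (simp add: power2_eq_square scaleR_conv_of_real[where 'a=complex] algebra_simps)

lemma mixrows_scaleR: "mixrows (r1 *\<^sub>R N1) (r2 *\<^sub>R N2) = (of_real r1 * of_real r2) *s mixrows N1 N2"
  unfolding vec_eq_iff forall_3 mixrows_def crs_def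
  by (simp add: scaleR_conv_of_real[where 'a=complex] algebra_simps)

definition CC :: "complex \<Rightarrow> complex \<Rightarrow> complex \<Rightarrow> complex \<Rightarrow> complex^3^2 \<Rightarrow> complex^3^2 \<Rightarrow> bool" where
  "CC al be ga de N1 N2 \<longleftrightarrow>
    (\<forall>i j. al*be*ga*de * (mixrows N1 N2)$i * (mixrows N1 N2)$j
           = (al*de+be*ga)^2 * (crossrows N1)$i * (crossrows N2)$j)
    \<and> (al*be = 0 \<longrightarrow> crossrows N1 = 0) \<and> (ga*de = 0 \<longrightarrow> crossrows N2 = 0)"

lemma CC_Nmat: "CC al be ga de (r1 *\<^sub>R Nmat al be A B) (r2 *\<^sub>R Nmat ga de A B)"
  unfolding CC_def crossrows_scaleR mixrows_scaleR crossrows_Nmat mixrows_Nmat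
proof (intro conjI allI impI)
  fix i j :: 3
  show "al * be * ga * de *
         ((complex_of_real r1 * complex_of_real r2) *s (((al*de+be*ga)*(- det A)) *s crs (B$1) (B$3))) $ i *
         ((complex_of_real r1 * complex_of_real r2) *s (((al*de+be*ga)*(- det A)) *s crs (B$1) (B$3))) $ j =
         (al * de + be * ga)\<^sup>2 * ((complex_of_real r1)\<^sup>2 *s ((al*be*(- det A)) *s crs (B$1) (B$3))) $ i *
         ((complex_of_real r2)\<^sup>2 *s ((ga*de*(- det A)) *s crs (B$1) (B$3))) $ j"
    unfolding vector_smult_component by algebra
qed (simp_all add: vec_eq_iff)

lemma crs_comp: "crs u w $ 1 = u$2 * w$3 - u$3 * w$2" "crs u w $ 2 = u$3 * w$1 - u$1 * w$3"
  "crs u w $ 3 = u$1 * w$2 - u$2 * w$1"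
  by (simp_all add: crs_def)

lemma tendsto_crs:
  assumes f: "f \<longlonglongrightarrow> u" and g: "g \<longlonglongrightarrow> v" shows "(\<lambda>n. crs (f n) (g n)) \<longlonglongrightarrow> crs u v"
proof (rule vec_tendstoI)
  fix i :: 3
  have 1: "((\<lambda>n. crs (f n) (g n) $ 1) \<longlonglongrightarrow> crs u v $ 1)"
    unfolding crs_comp by (intro tendsto_intros tendsto_vec_nth f g)
  have 2: "((\<lambda>n. crs (f n) (g n) $ 2) \<longlonglongrightarrow> crs u v $ 2)"
    unfolding crs_comp by (intro tendsto_intros tendsto_vec_nth f g)
  have 3: "((\<lambda>n. crs (f n) (g n) $ 3) \<longlonglongrightarrow> crs u v $ 3)"
    unfolding crs_comp by (intro tendsto_intros tendsto_vec_nth f g)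
  show "((\<lambda>n. crs (f n) (g n) $ i) \<longlonglongrightarrow> crs u v $ i)" using exhaust_3[of i] 1 2 3 by auto
qed

lemma tendsto_crossrows: assumes "f \<longlonglongrightarrow> N" shows "(\<lambda>n. crossrows (f n)) \<longlonglongrightarrow> crossrows N"
  unfolding crossrows_def by (intro tendsto_crs tendsto_vec_nth assms)

lemma tendsto_mixrows: assumes "f \<longlonglongrightarrow> N1" "g \<longlonglongrightarrow> N2"
  shows "(\<lambda>n. mixrows (f n) (g n)) \<longlonglongrightarrow> mixrows N1 N2"
  unfolding mixrows_def by (intro tendsto_add tendsto_crs tendsto_vec_nth assms)

lemma CC_limit:
  assumes f: "f \<longlonglongrightarrow> N1" and g: "g \<longlonglongrightarrow> N2" and cc: "\<And>n. CC al be ga de (f n) (g n)"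
  shows "CC al be ga de N1 N2"
proof -
  have cr1: "(\<lambda>n. crossrows (f n)) \<longlonglongrightarrow> crossrows N1" using f by (rule tendsto_crossrows)
  have cr2: "(\<lambda>n. crossrows (g n)) \<longlonglongrightarrow> crossrows N2" using g by (rule tendsto_crossrows)
  have mx: "(\<lambda>n. mixrows (f n) (g n)) \<longlonglongrightarrow> mixrows N1 N2" using f g by (rule tendsto_mixrows)
  have A: "al*be*ga*de * (mixrows N1 N2)$i * (mixrows N1 N2)$j
           = (al*de+be*ga)^2 * (crossrows N1)$i * (crossrows N2)$j" for i j
  proof -
    have l1: "(\<lambda>n. al*be*ga*de * (mixrows (f n) (g n))$i * (mixrows (f n) (g n))$j)
       \<longlonglongrightarrow> al*be*ga*de * (mixrows N1 N2)$i * (mixrows N1 N2)$j"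
      by (intro tendsto_intros tendsto_vec_nth mx)
    have l2: "(\<lambda>n. (al*de+be*ga)^2 * (crossrows (f n))$i * (crossrows (g n))$j)
       \<longlonglongrightarrow> (al*de+be*ga)^2 * (crossrows N1)$i * (crossrows N2)$j"
      by (intro tendsto_intros tendsto_vec_nth cr1 cr2)
    have eq: "\<And>n. al*be*ga*de * (mixrows (f n) (g n))$i * (mixrows (f n) (g n))$j
        = (al*de+be*ga)^2 * (crossrows (f n))$i * (crossrows (g n))$j"
      using cc unfolding CC_def by blast
    have "(\<lambda>n. al*be*ga*de * (mixrows (f n) (g n))$i * (mixrows (f n) (g n))$j)
         = (\<lambda>n. (al*de+be*ga)^2 * (crossrows (f n))$i * (crossrows (g n))$j)" (is "?L = ?R")
      by (rule ext) (rule eq)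
    have "?R \<longlonglongrightarrow> al*be*ga*de * (mixrows N1 N2)$i * (mixrows N1 N2)$j"
      using l1 unfolding \<open>?L = ?R\<close> .
    from LIMSEQ_unique[OF this l2] show ?thesis .
  qed
  have B: "crossrows N1 = 0" if "al*be = 0"
  proof -
    have eq: "\<And>n. crossrows (f n) = 0" using cc that unfolding CC_def by blast
    have e: "(\<lambda>n. crossrows (f n)) = (\<lambda>n. 0)" by (rule ext) (rule eq)
    have "(\<lambda>n. crossrows (f n)) \<longlonglongrightarrow> 0" unfolding e by (rule tendsto_const)
    from LIMSEQ_unique[OF cr1 this] show ?thesis .
  qed
  have C: "crossrows N2 = 0" if "ga*de = 0"
  proof -
    have eq: "\<And>n. crossrows (g n) = 0" using cc that unfolding CC_def by blast
    have e: "(\<lambda>n. crossrows (g n)) = (\<lambda>n. 0)" by (rule ext) (rule eq)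
    have "(\<lambda>n. crossrows (g n)) \<longlonglongrightarrow> 0" unfolding e by (rule tendsto_const)
    from LIMSEQ_unique[OF cr2 this] show ?thesis .
  qed
  show ?thesis unfolding CC_def using A B C by blast
qed

lemma Nmat_kernel: "Nmat al be A B *v crs (B$3) (B$1) = 0"
  unfolding vec_eq_iff forall_2 matrix_vector_mult_def Nmat_def crs_def
  by (simp add: sum_3 algebra_simps)

lemma dot_crs_det: "dotv (B$2) (crs (B$3) (B$1)) = det (B::complex^3^3)"
  by (simp add: dotv3 crs_def det_3 algebra_simps)

lemma Nmat_nz:
  assumes "det A = 1" "det B = 1" "al \<noteq> 0 \<or> be \<noteq> 0"
  shows "Nmat al be A B \<noteq> 0"
proof
  assume N0: "Nmat al be A B = 0"
  have z: "al*(A *v x)$2*(B *v y)$1 + be*(A *v x)$1*(B *v y)$3 = 0" for x y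
    unfolding E_Nmat N0 by (simp add: bil_def)
  have "al = 0"
  proof -
    define x where "x = (vector [- A$1$2, A$1$1] :: complex^2)"
    define y where "y = crs (B$2) (B$3)"
    have "(A *v x)$2 = 1" "(A *v x)$1 = 0" using assms(1) by (simp_all add: x_def mv2 det_2 algebra_simps)
    moreover have "(B *v y)$1 = 1" "(B *v y)$3 = 0" using assms(2)
      by (simp_all add: y_def mv3 crs_def det_3 algebra_simps)
    ultimately show ?thesis using z[of x y] by simp
  qed
  moreover have "be = 0"
  proof -
    define x where "x = (vector [A$2$2, - A$2$1] :: complex^2)"
    define y where "y = crs (B$1) (B$2)"
    have "(A *v x)$1 = 1" "(A *v x)$2 = 0" using assms(1) by (simp_all add: x_def mv2 det_2 algebra_simps)
    moreover have "(B *v y)$3 = 1" "(B *v y)$1 = 0" using assms(2)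
      by (simp_all add: y_def mv3 crs_def det_3 algebra_simps)
    ultimately show ?thesis using z[of x y] by simp
  qed
  ultimately show False using assms(3) by simp
qed

lemma dotv_scaleR: "dotv (r *\<^sub>R m) y = of_real r * dotv m y"
  by (simp add: dotv_def scaleR_conv_of_real[where 'a=complex] sum_distrib_left mult.assoc)

lemma bil_scaleR: "bil (r *\<^sub>R N) x y = of_real r * bil N x y"
  by (simp add: bil_def scaleR_conv_of_real[where 'a=complex] sum_distrib_left algebra_simps)

lemma mv_scaleR: "(r *\<^sub>R (N::complex^3^2)) *v (q *\<^sub>R w) = (r*q) *\<^sub>R (N *v w)"
  unfolding vec_eq_iff
  by (simp add: matrix_vector_mult_def scaleR_conv_of_real[where 'a=complex] sum_distrib_left algebra_simps)

lemma tendsto_dotv: assumes "f \<longlonglongrightarrow> m" shows "(\<lambda>n. dotv (f n) y) \<longlonglongrightarrow> dotv m y"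
  unfolding dotv_def by (intro tendsto_intros tendsto_vec_nth assms)

lemma tendsto_bil: assumes "f \<longlonglongrightarrow> N" shows "(\<lambda>n. bil (f n) x y) \<longlonglongrightarrow> bil N x y"
  unfolding bil_def by (intro tendsto_intros tendsto_vec_nth assms)

lemma tendsto_mv32:
  assumes "f \<longlonglongrightarrow> (N::complex^3^2)" "g \<longlonglongrightarrow> w" shows "(\<lambda>n. f n *v g n) \<longlonglongrightarrow> N *v w"
proof (rule vec_tendstoI)
  fix i
  show "(\<lambda>n. (f n *v g n) $ i) \<longlonglongrightarrow> (N *v w) $ i"
    unfolding matrix_vector_mult_def vec_lambda_beta by (intro tendsto_intros tendsto_vec_nth assms)
qed

lemma lim_norm1:
  fixes f :: "nat \<Rightarrow> 'a::real_normed_vector"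
  assumes "f \<longlonglongrightarrow> L" "\<And>n. norm (f n) = 1" shows "L \<noteq> 0"
proof -
  have "(\<lambda>n. norm (f n)) \<longlonglongrightarrow> norm L" using assms(1) by (rule tendsto_norm)
  moreover have "(\<lambda>n. norm (f n)) = (\<lambda>n. 1)" by (rule ext) (rule assms(2))
  ultimately have "(\<lambda>n. 1) \<longlonglongrightarrow> norm L" by simp
  from LIMSEQ_unique[OF tendsto_const this] have "norm L = 1" by simp
  thus ?thesis by auto
qed

lemma pipeline:
  assumes nd: "al*de - be*ga \<noteq> 0" and cl: "in_closure H (cone_orbit (FF al be ga de))"
    and Hnz: "H \<noteq> (\<lambda>x y. 0)"
  shows "\<exists>\<mu> m N1 N2 w. \<mu> \<noteq> 0 \<and> w \<noteq> 0 \<and> N1 *v w = 0 \<and> N2 *v w = 0 \<and> CC al be ga de N1 N2 \<and>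
          (\<forall>x y. H x y = \<mu> * dotv m y * bil N1 x y * bil N2 x y)"
proof -
  define F where "F = FF al be ga de"
  obtain s where s1: "\<And>n. s n \<in> cone_orbit F" and s2: "\<And>x y. (\<lambda>n. s n x y) \<longlonglongrightarrow> H x y"
    using cl unfolding in_closure_def F_def by blast
  have "\<forall>n. \<exists>t A B. s n = (\<lambda>x y. t * act A B F x y) \<and> t \<noteq> 0 \<and> det A = 1 \<and> det B = 1"
  proof
    fix n
    obtain t G where tG: "s n = (\<lambda>x y. t * G x y)" "t \<noteq> 0" "G \<in> SL_orbit F"
      using s1[of n] unfolding cone_orbit_def by blast
    moreover obtain A B where "G = act A B F" "det A = 1" "det B = 1"
      using tG(3) unfolding SL_orbit_def by blast
    ultimately show "\<exists>t A B. s n = (\<lambda>x y. t * act A B F x y) \<and> t \<noteq> 0 \<and> det A = 1 \<and> det B = 1"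
      by blast
  qed
  then obtain ts As Bs where sn: "\<And>n. s n = (\<lambda>x y. ts n * act (As n) (Bs n) F x y)"
    and tnz: "\<And>n. ts n \<noteq> 0" and dA: "\<And>n. det (As n) = 1" and dB: "\<And>n. det (Bs n) = 1" by metis
  have al_be: "al \<noteq> 0 \<or> be \<noteq> 0" and ga_de: "ga \<noteq> 0 \<or> de \<noteq> 0" using nd by auto
  define mm where "mm n = Bs n $ 2" for n
  define N1 where "N1 n = Nmat al be (As n) (Bs n)" for n
  define N2 where "N2 n = Nmat ga de (As n) (Bs n)" for n
  define ww where "ww n = crs (Bs n $ 3) (Bs n $ 1)" for n
  have mw: "dotv (mm n) (ww n) = 1" for n using dot_crs_det[of "Bs n"] dB[of n] by (simp add: mm_def ww_def)
  have mnz: "mm n \<noteq> 0" for n using mw[of n] by (auto simp: dotv_def)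
  have wnz: "ww n \<noteq> 0" for n using mw[of n] by (auto simp: dotv_def)
  have N1w: "N1 n *v ww n = 0" for n unfolding N1_def ww_def by (rule Nmat_kernel)
  have N2w: "N2 n *v ww n = 0" for n unfolding N2_def ww_def by (rule Nmat_kernel)
  have N1nz: "N1 n \<noteq> 0" for n unfolding N1_def using dA dB al_be by (rule Nmat_nz)
  have N2nz: "N2 n \<noteq> 0" for n unfolding N2_def using dA dB ga_de by (rule Nmat_nz)
  have sfac: "s n x y = ts n * dotv (mm n) y * bil (N1 n) x y * bil (N2 n) x y" for n x y
  proof -
    have "(Bs n *v y)$2 = dotv (mm n) y" by (simp add: mm_def matrix_vector_mult_def dotv_def)
    thus ?thesis unfolding sn act_def F_def FF_def N1_def N2_def E_Nmat[symmetric] by simp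
  qed
  define nm where "nm n = norm (mm n)" for n
  define n1 where "n1 n = norm (N1 n)" for n
  define n2 where "n2 n = norm (N2 n)" for n
  define nw where "nw n = norm (ww n)" for n
  have pos: "nm n > 0" "n1 n > 0" "n2 n > 0" "nw n > 0" for n
    using mnz[of n] N1nz[of n] N2nz[of n] wnz[of n] by (auto simp: nm_def n1_def n2_def nw_def)
  define mh where "mh n = (1 / nm n) *\<^sub>R mm n" for n
  define N1h where "N1h n = (1 / n1 n) *\<^sub>R N1 n" for n
  define N2h where "N2h n = (1 / n2 n) *\<^sub>R N2 n" for n
  define wh where "wh n = (1 / nw n) *\<^sub>R ww n" for n
  have nh: "norm (mh n) = 1" "norm (N1h n) = 1" "norm (N2h n) = 1" "norm (wh n) = 1" for n
    using pos[of n] by (simp_all add: mh_def N1h_def N2h_def wh_def nm_def n1_def n2_def nw_def)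
  define g where "g n = (mh n, N1h n, N2h n, wh n)" for n
  have "range g \<subseteq> sphere 0 1 \<times> (sphere 0 1 \<times> (sphere 0 1 \<times> sphere 0 1))"
    using nh by (auto simp: g_def)
  moreover have "bounded (sphere (0::complex^3) 1 \<times> (sphere (0::complex^3^2) 1 \<times> (sphere (0::complex^3^2) 1 \<times> sphere (0::complex^3) 1)))"
    by (intro bounded_Times bounded_sphere)
  ultimately have "bounded (range g)" by (rule bounded_subset[rotated])
  then obtain l r where r: "strict_mono r" and conv: "(g \<circ> r) \<longlonglongrightarrow> l"
    using bounded_imp_convergent_subsequence by blast
  define mL where "mL = fst l"
  define N1L where "N1L = fst (snd l)"
  define N2L where "N2L = fst (snd (snd l))"
  define wL where "wL = snd (snd (snd l))"
  have cm: "(\<lambda>n. mh (r n)) \<longlonglongrightarrow> mL" using tendsto_fst[OF conv] by (simp add: g_def mL_def o_def)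
  have c1: "(\<lambda>n. N1h (r n)) \<longlonglongrightarrow> N1L"
    using tendsto_fst[OF tendsto_snd[OF conv]] by (simp add: g_def N1L_def o_def)
  have c2: "(\<lambda>n. N2h (r n)) \<longlonglongrightarrow> N2L"
    using tendsto_fst[OF tendsto_snd[OF tendsto_snd[OF conv]]] by (simp add: g_def N2L_def o_def)
  have cw: "(\<lambda>n. wh (r n)) \<longlonglongrightarrow> wL"
    using tendsto_snd[OF tendsto_snd[OF tendsto_snd[OF conv]]] by (simp add: g_def wL_def o_def)
  have mLnz: "mL \<noteq> 0" using cm by (rule lim_norm1) (simp add: nh)
  have N1Lnz: "N1L \<noteq> 0" using c1 by (rule lim_norm1) (simp add: nh)
  have N2Lnz: "N2L \<noteq> 0" using c2 by (rule lim_norm1) (simp add: nh)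
  have wLnz: "wL \<noteq> 0" using cw by (rule lim_norm1) (simp add: nh)
  define P where "P n x y = dotv (mh n) y * bil (N1h n) x y * bil (N2h n) x y" for n x y
  define PL where "PL x y = dotv mL y * bil N1L x y * bil N2L x y" for x y
  define mu where "mu n = ts n * of_real (nm n * n1 n * n2 n)" for n
  have sP: "s n x y = mu n * P n x y" for n x y
  proof -
    have "nm n \<noteq> 0" "n1 n \<noteq> 0" "n2 n \<noteq> 0" using pos[of n] by auto
    thus ?thesis unfolding sfac P_def mu_def mh_def N1h_def N2h_def dotv_scaleR bil_scaleR
      by (simp add: field_simps)
  qed
  have PLc: "(\<lambda>n. P (r n) x y) \<longlonglongrightarrow> PL x y" for x y
    unfolding P_def PL_def by (intro tendsto_intros tendsto_dotv tendsto_bil cm c1 c2)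
  obtain x0 y0 where xy0: "PL x0 y0 \<noteq> 0" using NVB[OF mLnz N1Lnz N2Lnz] unfolding PL_def by blast
  define muL where "muL = H x0 y0 / PL x0 y0"
  have sr: "(\<lambda>n. s (r n) x y) \<longlonglongrightarrow> H x y" for x y
    using LIMSEQ_subseq_LIMSEQ[OF s2 r] by (simp add: o_def)
  have "(\<lambda>n. s (r n) x0 y0 / P (r n) x0 y0) \<longlonglongrightarrow> H x0 y0 / PL x0 y0"
    by (intro tendsto_divide sr PLc xy0)
  moreover have "eventually (\<lambda>n. s (r n) x0 y0 / P (r n) x0 y0 = mu (r n)) sequentially"
  proof -
    have "eventually (\<lambda>n. P (r n) x0 y0 \<noteq> 0) sequentially"
      using tendsto_imp_eventually_ne[OF PLc xy0] .
    thus ?thesis by eventually_elim (simp add: sP)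
  qed
  ultimately have mu_c: "(\<lambda>n. mu (r n)) \<longlonglongrightarrow> muL" unfolding muL_def by (rule Lim_transform_eventually)
  have Hrep: "H x y = muL * PL x y" for x y
  proof -
    have "(\<lambda>n. s (r n) x y) \<longlonglongrightarrow> muL * PL x y" unfolding sP by (intro tendsto_mult mu_c PLc)
    with sr show ?thesis by (rule LIMSEQ_unique)
  qed
  have muLnz: "muL \<noteq> 0"
  proof
    assume "muL = 0"
    hence "H = (\<lambda>x y. 0)" using Hrep by (intro ext) simp
    with Hnz show False ..
  qed
  have kz: "N1h n *v wh n = 0" "N2h n *v wh n = 0" for n
    unfolding N1h_def N2h_def wh_def mv_scaleR N1w N2w by simp_all
  have k1: "N1L *v wL = 0"
  proof -
    have "(\<lambda>n. N1h (r n) *v wh (r n)) \<longlonglongrightarrow> N1L *v wL" by (intro tendsto_mv32 c1 cw)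
    moreover have "(\<lambda>n. N1h (r n) *v wh (r n)) = (\<lambda>n. 0)" by (rule ext) (rule kz)
    ultimately have "(\<lambda>n. 0) \<longlonglongrightarrow> N1L *v wL" by simp
    from LIMSEQ_unique[OF tendsto_const this] show ?thesis by simp
  qed
  have k2: "N2L *v wL = 0"
  proof -
    have "(\<lambda>n. N2h (r n) *v wh (r n)) \<longlonglongrightarrow> N2L *v wL" by (intro tendsto_mv32 c2 cw)
    moreover have "(\<lambda>n. N2h (r n) *v wh (r n)) = (\<lambda>n. 0)" by (rule ext) (rule kz)
    ultimately have "(\<lambda>n. 0) \<longlonglongrightarrow> N2L *v wL" by simp
    from LIMSEQ_unique[OF tendsto_const this] show ?thesis by simp
  qed
  have ccn: "CC al be ga de (N1h (r n)) (N2h (r n))" for n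
    unfolding N1h_def N2h_def N1_def N2_def by (rule CC_Nmat)
  have cc: "CC al be ga de N1L N2L" using c1 c2 ccn by (rule CC_limit)
  show ?thesis
    apply (rule exI[of _ muL], rule exI[of _ mL], rule exI[of _ N1L], rule exI[of _ N2L], rule exI[of _ wL])
    using muLnz wLnz k1 k2 cc Hrep unfolding PL_def by (simp add: mult.assoc)
qed

definition e2v :: "complex^3" where "e2v = vector [0,1,0]"

lemma B0_exists:
  assumes "(w::complex^3) \<noteq> 0" shows "\<exists>B0. det B0 = 1 \<and> B0 *v e2v = w"
proof -
  consider "w$2 \<noteq> 0" | "w$1 \<noteq> 0" | "w$3 \<noteq> 0" using assms by (auto simp: vec_eq_iff forall_3)
  thus ?thesis
  proof cases
    case 1
    let ?B = "vector [vector [1/w$2, w$1, 0], vector [0, w$2, 0], vector [0, w$3, 1]] :: complex^3^3"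
    have "det ?B = 1" using 1 by (simp add: det_3)
    moreover have "?B *v e2v = w" by (simp add: vec_eq_iff forall_3 mv3 e2v_def)
    ultimately show ?thesis by blast
  next
    case 2
    let ?B = "vector [vector [0, w$1, 0], vector [-1/w$1, w$2, 0], vector [0, w$3, 1]] :: complex^3^3"
    have "det ?B = 1" using 2 by (simp add: det_3)
    moreover have "?B *v e2v = w" by (simp add: vec_eq_iff forall_3 mv3 e2v_def)
    ultimately show ?thesis by blast
  next
    case 3
    let ?B = "vector [vector [1, w$1, 0], vector [0, w$2, -1/w$3], vector [0, w$3, 0]] :: complex^3^3"
    have "det ?B = 1" using 3 by (simp add: det_3)
    moreover have "?B *v e2v = w" by (simp add: vec_eq_iff forall_3 mv3 e2v_def)
    ultimately show ?thesis by blast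
  qed
qed

lemma dotv_mv: "dotv m ((B::complex^3^3) *v y) = dotv (transpose B *v m) y"
  by (simp add: dotv3 mv3 transpose_def algebra_simps)

lemma bil_mv: "bil N x ((B::complex^3^3) *v y) = bil (N ** B) x y"
  by (simp add: bil_expand mv3 matrix_matrix_mult_def sum_3 algebra_simps)

lemma mv_e2v: "((M::complex^3^'n) *v e2v) $ j = M$j$2"
  by (simp add: matrix_vector_mult_def sum_3 e2v_def)

lemma row_mult: "((N::complex^3^2) ** B) $ j = transpose B *v (N$j)"
  by (simp add: vec_eq_iff matrix_matrix_mult_def matrix_vector_mult_def transpose_def mult.commute)

definition cofT :: "complex^3^3 \<Rightarrow> complex^3^3" where
  "cofT B = vector [
    vector [B$2$2*B$3$3 - B$3$2*B$2$3, B$3$2*B$1$3 - B$1$2*B$3$3, B$1$2*B$2$3 - B$2$2*B$1$3],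
    vector [B$2$3*B$3$1 - B$3$3*B$2$1, B$3$3*B$1$1 - B$1$3*B$3$1, B$1$3*B$2$1 - B$2$3*B$1$1],
    vector [B$2$1*B$3$2 - B$3$1*B$2$2, B$3$1*B$1$2 - B$1$1*B$3$2, B$1$1*B$2$2 - B$2$1*B$1$2]]"

lemma crs_transform: "crs (transpose B *v u) (transpose B *v v) = cofT B *v crs u v"
  unfolding vec_eq_iff forall_3
  by (simp add: crs_def mv3 cofT_def transpose_def algebra_simps)

lemma crossrows_mult: "crossrows (N ** B) = cofT B *v crossrows N"
  unfolding crossrows_def row_mult crs_transform ..

lemma mixrows_mult: "mixrows (N1 ** B) (N2 ** B) = cofT B *v mixrows N1 N2"
  unfolding mixrows_def row_mult crs_transform by (simp add: matrix_vector_right_distrib)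

lemma quad_transform:
  fixes L :: "complex^3^3"
  assumes h: "\<And>a b. k1 * XB$a * XB$b = k2 * XA$a * XC$b"
  shows "k1 * (L *v XB)$i * (L *v XB)$j = k2 * (L *v XA)$i * (L *v XC)$j"
proof -
  have "k1 * (L *v XB)$i * (L *v XB)$j = (\<Sum>a\<in>UNIV. \<Sum>b\<in>UNIV. L$i$a * L$j$b * (k1 * XB$a * XB$b))"
    by (simp add: matrix_vector_mult_def sum_product sum_distrib_left mult_ac)
  also have "\<dots> = (\<Sum>a\<in>UNIV. \<Sum>b\<in>UNIV. L$i$a * L$j$b * (k2 * XA$a * XC$b))"
    by (simp only: h)
  also have "\<dots> = k2 * (L *v XA)$i * (L *v XC)$j"
    by (simp add: matrix_vector_mult_def sum_product sum_distrib_left mult_ac)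
  finally show ?thesis .
qed

lemma CC_mult:
  assumes "CC al be ga de N1 N2" shows "CC al be ga de (N1 ** B) (N2 ** B)"
  using assms unfolding CC_def crossrows_mult mixrows_mult
  by (auto intro: quad_transform)

definition Dg :: "complex \<Rightarrow> complex \<Rightarrow> complex \<Rightarrow> complex^3^3" where
  "Dg a b c = vector [vector [a,0,0], vector [0,b,0], vector [0,0,c]]"

lemma det_Dg: "det (Dg a b c) = a*b*c" by (simp add: Dg_def det_3)

lemma lim_inv_Suc: "(\<lambda>n. 1 / (of_nat (Suc n) :: complex)) \<longlonglongrightarrow> 0"
proof -
  have "(\<lambda>n. inverse (of_nat n :: complex)) \<longlonglongrightarrow> 0" by (rule lim_inverse_n)
  hence "(\<lambda>n. inverse (of_nat (Suc n) :: complex)) \<longlonglongrightarrow> 0" by (rule LIMSEQ_Suc)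
  thus ?thesis by (simp add: divide_inverse)
qed

lemma normal_form:
  assumes Hrep: "\<And>x y. H x y = \<mu> * dotv m y * bil N1 x y * bil N2 x y"
    and wnz: "w \<noteq> 0" and k1: "N1 *v w = 0" and k2: "N2 *v w = 0"
    and cc: "CC al be ga de N1 N2" and ss: "ss H"
  shows "\<exists>B P1 P2. det B = 1 \<and> (\<forall>j. P1$j$2 = 0) \<and> (\<forall>j. P2$j$2 = 0) \<and> CC al be ga de P1 P2 \<and>
     act (mat 1) B H = (\<lambda>x y. \<mu> * y$2 * bil P1 x y * bil P2 x y)"
proof -
  obtain B0 where B0: "det B0 = 1" "B0 *v e2v = w" using B0_exists[OF wnz] by blast
  define m' where "m' = transpose B0 *v m"
  define Q1 where "Q1 = N1 ** B0"
  define Q2 where "Q2 = N2 ** B0"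
  have q1: "Q1$j$2 = 0" for j
  proof -
    have "Q1$j$2 = (Q1 *v e2v)$j" by (simp add: mv_e2v)
    also have "\<dots> = 0" unfolding Q1_def matrix_vector_mul_assoc[symmetric] B0 k1 by simp
    finally show ?thesis .
  qed
  have q2: "Q2$j$2 = 0" for j
  proof -
    have "Q2$j$2 = (Q2 *v e2v)$j" by (simp add: mv_e2v)
    also have "\<dots> = 0" unfolding Q2_def matrix_vector_mul_assoc[symmetric] B0 k2 by simp
    finally show ?thesis .
  qed
  have G0: "act (mat 1) B0 H x y = \<mu> * dotv m' y * bil Q1 x y * bil Q2 x y" for x y
    by (simp add: act_def Hrep dotv_mv bil_mv m'_def Q1_def Q2_def)
  have ss0: "ss (act (mat 1) B0 H)" using ss_act[OF ss _ B0(1)] by simp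
  show ?thesis
  proof (cases "m'$2 = 0")
    case True
    define kk where "kk n = (of_nat (Suc n) :: complex)" for n
    have kknz: "kk n \<noteq> 0" for n unfolding kk_def by (simp del: of_nat_Suc)
    define Bs where "Bs n = Dg (1 / kk n) ((kk n)^2) (1 / kk n)" for n
    have dBs: "det (Bs n) = 1" for n using kknz[of n]
      by (simp add: Bs_def det_Dg power2_eq_square field_simps)
    have scal: "act (mat 1) B0 H (mat 1 *v x) (Bs n *v y) = (1 / kk n)^3 * act (mat 1) B0 H x y" for n x y
      unfolding G0 using True q1 q2
      by (simp add: Bs_def Dg_def mv3 dotv3 bil_expand power3_eq_cube algebra_simps)
    have "\<not> ss (act (mat 1) B0 H)"
    proof (rule not_ss_seq[of "\<lambda>n. mat 1" Bs])
      show "det (mat 1 :: complex^2^2) = 1" for k :: nat by simp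
      show "det (Bs k) = 1" for k by (rule dBs)
      fix x y
      have "(\<lambda>n. (1 / kk n)^3 * act (mat 1) B0 H x y) \<longlonglongrightarrow> 0^3 * act (mat 1) B0 H x y"
        unfolding kk_def by (intro tendsto_intros lim_inv_Suc)
      thus "(\<lambda>k. act (mat 1) B0 H (mat 1 *v x) (Bs k *v y)) \<longlonglongrightarrow> 0" unfolding scal by simp
    qed
    with ss0 show ?thesis by contradiction
  next
    case False
    define B1 :: "complex^3^3" where "B1 = vector [vector [m'$2, 0, 0], vector [- m'$1, 1 / m'$2, - m'$3 / m'$2],
        vector [0, 0, 1]]"
    have dB1: "det B1 = 1" using False by (simp add: B1_def det_3)
    have tB1: "transpose B1 *v m' = e2v" using False
      by (simp add: B1_def vec_eq_iff forall_3 mv3 transpose_def e2v_def)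
    define B where "B = B0 ** B1"
    have dB: "det B = 1" by (simp add: B_def det_mul B0 dB1)
    define P1 where "P1 = N1 ** B"
    define P2 where "P2 = N2 ** B"
    have P1Q: "P1 = Q1 ** B1" by (simp add: P1_def Q1_def B_def matrix_mul_assoc)
    have P2Q: "P2 = Q2 ** B1" by (simp add: P2_def Q2_def B_def matrix_mul_assoc)
    have p1: "P1$j$2 = 0" for j using q1[of j] unfolding P1Q
      by (simp add: matrix_matrix_mult_def sum_3 B1_def)
    have p2: "P2$j$2 = 0" for j using q2[of j] unfolding P2Q
      by (simp add: matrix_matrix_mult_def sum_3 B1_def)
    have tB: "transpose B *v m = e2v"
    proof -
      have "transpose B *v m = transpose B1 *v (transpose B0 *v m)"
        unfolding B_def matrix_transpose_mul matrix_vector_mul_assoc ..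
      from this tB1[unfolded m'_def] show ?thesis by (rule trans)
    qed
    have "act (mat 1) B H = (\<lambda>x y. \<mu> * y$2 * bil P1 x y * bil P2 x y)"
    proof (intro ext)
      fix x y
      have "dotv m (B *v y) = dotv (transpose B *v m) y" by (rule dotv_mv)
      also have "\<dots> = dotv e2v y" by (simp only: tB)
      also have "\<dots> = y$2" by (simp add: dotv3 e2v_def)
      finally have dm: "dotv m (B *v y) = y$2" .
      show "act (mat 1) B H x y = \<mu> * y$2 * bil P1 x y * bil P2 x y"
        by (simp add: act_def Hrep dm bil_mv P1_def P2_def)
    qed
    moreover have "CC al be ga de P1 P2" unfolding P1_def P2_def by (rule CC_mult[OF cc])
    ultimately show ?thesis using dB p1 p2 by blast
  qed
qed

definition Am :: "complex^3^2 \<Rightarrow> complex" where "Am P = P$1$1*P$2$3 - P$1$3*P$2$1"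
definition Bm :: "complex^3^2 \<Rightarrow> complex^3^2 \<Rightarrow> complex" where
  "Bm P1 P2 = P1$1$1*P2$2$3 + P2$1$1*P1$2$3 - P1$1$3*P2$2$1 - P2$1$3*P1$2$1"

definition GG :: "complex \<Rightarrow> complex^3^2 \<Rightarrow> complex^3^2 \<Rightarrow> form" where
  "GG \<mu> P1 P2 = (\<lambda>x y. \<mu> * y$2 * bil P1 x y * bil P2 x y)"

definition c2z :: "complex^3^2 \<Rightarrow> bool" where "c2z P \<longleftrightarrow> P$1$2 = 0 \<and> P$2$2 = 0"

lemma CC_consequences:
  assumes "CC al be ga de P1 P2" "c2z P1" "c2z P2"
  shows "al*be*ga*de*(Bm P1 P2)^2 = (al*de+be*ga)^2 * Am P1 * Am P2"
    "al*be = 0 \<Longrightarrow> Am P1 = 0" "ga*de = 0 \<Longrightarrow> Am P2 = 0"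
proof -
  have cr1: "crossrows P1 $ 2 = - Am P1" using assms(2) by (simp add: crossrows_def crs_comp Am_def c2z_def)
  have cr2: "crossrows P2 $ 2 = - Am P2" using assms(3) by (simp add: crossrows_def crs_comp Am_def c2z_def)
  have mx: "mixrows P1 P2 $ 2 = - Bm P1 P2" using assms(2,3)
    by (simp add: mixrows_def crs_comp Bm_def c2z_def algebra_simps)
  from assms(1) have "al*be*ga*de * (mixrows P1 P2)$2 * (mixrows P1 P2)$2
           = (al*de+be*ga)^2 * (crossrows P1)$2 * (crossrows P2)$2" unfolding CC_def by blast
  thus "al*be*ga*de*(Bm P1 P2)^2 = (al*de+be*ga)^2 * Am P1 * Am P2"
    unfolding cr1 cr2 mx by (simp add: power2_eq_square mult.assoc)
  show "Am P1 = 0" if "al*be = 0" using assms(1) that cr1 unfolding CC_def by simp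
  show "Am P2 = 0" if "ga*de = 0" using assms(1) that cr2 unfolding CC_def by simp
qed

lemma bil_c2z: "c2z P \<Longrightarrow> bil P x y = x$1*(P$1$1*y$1 + P$1$3*y$3) + x$2*(P$2$1*y$1 + P$2$3*y$3)"
  by (simp add: bil_expand c2z_def algebra_simps)

lemma rank1:
  fixes p q r t :: complex
  assumes "p * t - q * r = 0"
  shows "\<exists>u1 u2 v1 v2. p = u1 * v1 \<and> q = u1 * v2 \<and> r = u2 * v1 \<and> t = u2 * v2"
proof (cases "p = 0")
  case False
  have "t = (r/p) * q" using assms False by (simp add: field_simps)
  thus ?thesis using False by (intro exI[of _ 1] exI[of _ "r/p"] exI[of _ p] exI[of _ q]) simp
next
  case p: True
  show ?thesis
  proof (cases "q = 0")
    case False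
    have "r = 0" using assms p False by simp
    thus ?thesis using p False by (intro exI[of _ 1] exI[of _ "t/q"] exI[of _ 0] exI[of _ q]) simp
  next
    case True
    thus ?thesis using p by (intro exI[of _ 0] exI[of _ 1] exI[of _ r] exI[of _ t]) simp
  qed
qed

lemma inv_pair: "(u1::complex) \<noteq> 0 \<or> u2 \<noteq> 0 \<Longrightarrow> \<exists>a b. u1*a + u2*b = c"
proof -
  assume "u1 \<noteq> 0 \<or> u2 \<noteq> 0"
  thus ?thesis
  proof
    assume "u1 \<noteq> 0" thus ?thesis by (intro exI[of _ "c/u1"] exI[of _ 0]) simp
  next
    assume "u2 \<noteq> 0" thus ?thesis by (intro exI[of _ 0] exI[of _ "c/u2"]) simp
  qed
qed

lemma DN:
  assumes c1: "c2z P1" and c2: "c2z P2" and A0: "Am P1 = 0" and B0: "Bm P1 P2 = 0"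
  shows "\<not> ss (GG \<mu> P1 P2)"
proof -
  obtain u1 u2 v1 v2 where uv: "P1$1$1 = u1* v1" "P1$1$3 = u1* v2" "P1$2$1 = u2* v1" "P1$2$3 = u2* v2"
    using rank1[where p="P1$1$1" and q="P1$1$3" and r="P1$2$1" and t="P1$2$3"] A0 unfolding Am_def by blast
  have b1: "bil P1 x y = (u1*x$1 + u2*x$2) * (v1*y$1 + v2*y$3)" for x y
    using c1 by (simp add: bil_c2z uv algebra_simps)
  show ?thesis
  proof (cases "(u1 = 0 \<and> u2 = 0) \<or> (v1 = 0 \<and> v2 = 0)")
    case True
    hence "GG \<mu> P1 P2 = (\<lambda>x y. 0)" by (auto simp: GG_def b1)
    thus ?thesis using not_ss_zero by simp
  next
    case False
    obtain x11 x21 where xx: "u1*x11 + u2*x21 = 1" using inv_pair False by blast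
    obtain y12 y22 where yy: "v1*y12 + v2*y22 = -1" using inv_pair False by blast
    define p11 where "p11 = P2$1$1"
    define p13 where "p13 = P2$1$3"
    define p21 where "p21 = P2$2$1"
    define p23 where "p23 = P2$2$3"
    have Bx: "u2* v2*p11 - u2* v1*p13 - u1* v2*p21 + u1* v1*p23 = 0"
      using B0 unfolding Bm_def uv p11_def p13_def p21_def p23_def by (simp add: algebra_simps)
    define kk where "kk n = (of_nat (Suc n) :: complex)" for n
    have kknz: "kk n \<noteq> 0" for n unfolding kk_def by (simp del: of_nat_Suc)
    define ia where "ia n = 1 / kk n" for n
    have ab: "ia n * kk n = 1" for n using kknz[of n] by (simp add: ia_def)
    define As where "As n = (vector [vector [x11 * ia n, - u2 * kk n], vector [x21 * ia n, u1 * kk n]] :: complex^2^2)" for n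
    define Bs where "Bs n = (vector [vector [- v2 * kk n, 0, y12 * ia n], vector [0, 1, 0],
        vector [v1 * kk n, 0, y22 * ia n]] :: complex^3^3)" for n
    have dAs: "det (As n) = 1" for n
    proof -
      have "det (As n) = (ia n * kk n) * (u1*x11 + u2*x21)" by (simp add: As_def det_2 algebra_simps)
      thus ?thesis using ab xx by simp
    qed
    have dBs: "det (Bs n) = 1" for n
    proof -
      have "det (Bs n) = - (ia n * kk n) * (v1*y12 + v2*y22)" by (simp add: Bs_def det_3 algebra_simps)
      thus ?thesis using ab yy by simp
    qed
    define c0 where "c0 x y = x$1*y$1*(x11*(-v2*p11 + v1*p13) + x21*(-v2*p21 + v1*p23))
        + x$2*y$3*(-u2*(y12*p11 + y22*p13) + u1*(y12*p21 + y22*p23))" for x :: "complex^2" and y :: "complex^3"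
    define c1 where "c1 x y = x$1*y$3*(x11*(y12*p11 + y22*p13) + x21*(y12*p21 + y22*p23))" for x :: "complex^2" and y :: "complex^3"
    have val1: "bil P1 (As n *v x) (Bs n *v y) = (- ((ia n)^2)) * x$1 * y$3" for n x y
    proof -
      have "bil P1 (As n *v x) (Bs n *v y) =
         (ia n * x$1 * (u1*x11 + u2*x21)) * (ia n * y$3 * (v1*y12 + v2*y22))"
        unfolding b1 by (simp add: As_def Bs_def mv2 mv3 algebra_simps)
      thus ?thesis using xx yy by (simp add: power2_eq_square)
    qed
    have val2: "bil P2 (As n *v x) (Bs n *v y) = c0 x y + (ia n)^2 * c1 x y" for n x y
    proof -
      have "bil P2 (As n *v x) (Bs n *v y) = (ia n * kk n) * c0 x y + (ia n)^2 * c1 x y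
          + (kk n)^2 * x$2 * y$1 * (u2* v2*p11 - u2* v1*p13 - u1* v2*p21 + u1* v1*p23)"
        using c2 unfolding c0_def c1_def
        by (simp add: bil_c2z As_def Bs_def mv2 mv3 p11_def p13_def p21_def p23_def
            power2_eq_square algebra_simps)
      thus ?thesis using ab Bx by simp
    qed
    have Bs2: "(Bs n *v y)$2 = y$2" for n y by (simp add: Bs_def mv3)
    show ?thesis
    proof (rule not_ss_seq[OF dAs dBs])
      fix x y
      have lim: "(\<lambda>n. \<mu> * y$2 * ((- ((ia n)^2)) * x$1 * y$3) * (c0 x y + (ia n)^2 * c1 x y))
          \<longlonglongrightarrow> \<mu> * y$2 * ((- (0^2)) * x$1 * y$3) * (c0 x y + 0^2 * c1 x y)"
        unfolding ia_def kk_def by (intro tendsto_intros lim_inv_Suc)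
      have "(\<lambda>n. GG \<mu> P1 P2 (As n *v x) (Bs n *v y)) =
          (\<lambda>n. \<mu> * y$2 * ((- ((ia n)^2)) * x$1 * y$3) * (c0 x y + (ia n)^2 * c1 x y))"
        by (simp add: GG_def val1 val2 Bs2)
      thus "(\<lambda>n. GG \<mu> P1 P2 (As n *v x) (Bs n *v y)) \<longlonglongrightarrow> 0" using lim by simp
    qed
  qed
qed


definition emb3 :: "complex^2^2 \<Rightarrow> complex^3^3" where
  "emb3 Y = vector [vector [Y$1$1, 0, Y$1$2], vector [0, 1, 0], vector [Y$2$1, 0, Y$2$2]]"
definition emb2 :: "complex^2^2 \<Rightarrow> complex^3^2" where
  "emb2 W = vector [vector [W$1$1, 0, W$1$2], vector [W$2$1, 0, W$2$2]]"
definition Kmat :: "complex \<Rightarrow> complex \<Rightarrow> complex^2^2" where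
  "Kmat a b = vector [vector [0, b], vector [a, 0]]"
definition tl2 :: "complex^3^2 \<Rightarrow> complex^2^2" where
  "tl2 P = vector [vector [P$1$1, P$1$3], vector [P$2$1, P$2$3]]"
definition Dm :: "complex \<Rightarrow> complex \<Rightarrow> complex^2^2" where
  "Dm a b = vector [vector [a, 0], vector [0, b]]"

lemma bridge:
  "a * (transpose Z *v x)$2 * (emb3 Y *v y)$1 + b * (transpose Z *v x)$1 * (emb3 Y *v y)$3
     = bil (emb2 (Z ** Kmat a b ** Y)) x y"
  unfolding emb3_def emb2_def Kmat_def mv2 mv3 bil_expand
  by (simp add: matrix_matrix_mult_def sum_2 transpose_def algebra_simps)

lemma emb2_scal: "c2z P \<Longrightarrow> bil (emb2 (mat c ** tl2 P)) x y = c * bil P x y"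
  unfolding emb2_def tl2_def
  by (simp add: c2z_def bil_expand matrix_matrix_mult_def sum_2 mat_def algebra_simps)

lemma emb3_2: "(emb3 Y *v y)$2 = y$2" by (simp add: emb3_def mv3)

lemma det_emb3: "det (emb3 Y) = det Y" by (simp add: emb3_def det_3 det_2 algebra_simps)

lemma det_adj2: "det (adj2 S) = det S" by (simp add: adj2_def det_2 algebra_simps)

lemma S_adj: "S ** adj2 S = mat (det S)"
  unfolding vec_eq_iff forall_2
  by (simp add: matrix_matrix_mult_def sum_2 adj2_def det_2 mat_def algebra_simps)

lemma cube_root: "(z::complex) \<noteq> 0 \<Longrightarrow> \<exists>s. s^3 = z"
proof -
  assume z: "z \<noteq> 0"
  have "(exp (Ln z / 3))^3 = exp (of_nat 3 * (Ln z / 3))" by (rule exp_of_nat_mult[symmetric])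
  also have "\<dots> = exp (Ln z)" by simp
  also have "\<dots> = z" using z by simp
  finally show ?thesis by blast
qed

lemma ORB:
  assumes mu: "\<mu> \<noteq> 0" and dA: "det A0 \<noteq> 0" and dB: "det B0 \<noteq> 0"
    and c: "c1 \<noteq> 0" "c2 \<noteq> 0" "sc \<noteq> 0"
    and E1: "\<And>x y. al*(A0 *v x)$2*(B0 *v y)$1 + be*(A0 *v x)$1*(B0 *v y)$3 = c1 * bil P1 x y"
    and E2: "\<And>x y. ga*(A0 *v x)$2*(B0 *v y)$1 + de*(A0 *v x)$1*(B0 *v y)$3 = c2 * bil P2 x y"
    and Y2: "\<And>y. (B0 *v y)$2 = sc * y$2"
  shows "GG \<mu> P1 P2 \<in> cone_orbit (FF al be ga de)"
proof -
  define r where "r = csqrt (det A0)"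
  have r2: "r^2 = det A0" by (simp add: r_def)
  obtain q where q3: "q^3 = det B0" using cube_root[OF dB] by blast
  have rnz: "r \<noteq> 0" using r2 dA by auto
  have qnz: "q \<noteq> 0" using q3 dB by auto
  define A where "A = (\<chi> i j. A0$i$j / r)"
  define B where "B = (\<chi> i j. B0$i$j / q)"
  have Av: "(A *v x)$i = (A0 *v x)$i / r" for x i
    by (simp add: A_def matrix_vector_mult_def sum_divide_distrib)
  have Bv: "(B *v y)$i = (B0 *v y)$i / q" for y i
    by (simp add: B_def matrix_vector_mult_def sum_divide_distrib)
  have detA: "det A = 1"
  proof -
    have "det A = det A0 / r^2" using rnz by (simp add: A_def det_2 power2_eq_square field_simps)
    thus ?thesis using r2 dA by simp
  qed
  have detB: "det B = 1"
  proof -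
    have "det B = det B0 / q^3" using qnz by (simp add: B_def det_3 power3_eq_cube field_simps)
    thus ?thesis using q3 dB by simp
  qed
  define t where "t = \<mu> * r^2 * q^3 / (sc * c1 * c2)"
  have tnz: "t \<noteq> 0" using mu rnz qnz c by (simp add: t_def)
  have eq: "GG \<mu> P1 P2 = (\<lambda>x y. t * act A B (FF al be ga de) x y)"
  proof (intro ext)
    fix x y
    have e1: "al*(A *v x)$2*(B *v y)$1 + be*(A *v x)$1*(B *v y)$3 = c1 * bil P1 x y / (r*q)"
      unfolding Av Bv E1[symmetric] using rnz qnz by (simp add: field_simps)
    have e2: "ga*(A *v x)$2*(B *v y)$1 + de*(A *v x)$1*(B *v y)$3 = c2 * bil P2 x y / (r*q)"
      unfolding Av Bv E2[symmetric] using rnz qnz by (simp add: field_simps)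
    have "act A B (FF al be ga de) x y = (sc * y$2 / q) * (c1 * bil P1 x y / (r*q)) * (c2 * bil P2 x y / (r*q))"
      unfolding act_def FF_def e1 e2 by (simp add: Bv Y2)
    thus "GG \<mu> P1 P2 x y = t * act A B (FF al be ga de) x y"
      using rnz qnz c by (simp add: GG_def t_def power2_eq_square power3_eq_cube field_simps)
  qed
  have "act A B (FF al be ga de) \<in> SL_orbit (FF al be ga de)"
    unfolding SL_orbit_def using detA detB by blast
  thus ?thesis unfolding eq cone_orbit_def using tnz by blast
qed

lemma diag2:
  fixes M :: "complex^2^2"
  assumes ne: "l1 \<noteq> l2" and tr: "l1 + l2 = M$1$1 + M$2$2" and dt: "l1 * l2 = det M"
  shows "\<exists>S. det S \<noteq> 0 \<and> M ** S = S ** Dm l1 l2"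
proof -
  have cp1: "l1*l1 = l1*(M$1$1 + M$2$2) - (M$1$1*M$2$2 - M$1$2*M$2$1)"
    using tr dt unfolding det_2 by algebra
  have cp2: "l2*l2 = l2*(M$1$1 + M$2$2) - (M$1$1*M$2$2 - M$1$2*M$2$1)"
    using tr dt unfolding det_2 by algebra
  consider "M$1$2 \<noteq> 0" | "M$1$2 = 0" "M$2$1 \<noteq> 0" | "M$1$2 = 0" "M$2$1 = 0" by blast
  then show ?thesis
  proof cases
    case 1
    define S where "S = (vector [vector [M$1$2, M$1$2], vector [l1 - M$1$1, l2 - M$1$1]] :: complex^2^2)"
    have "det S = M$1$2 * (l2 - l1)" by (simp add: S_def det_2 algebra_simps)
    hence "det S \<noteq> 0" using 1 ne by simp
    moreover have "M ** S = S ** Dm l1 l2"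
      unfolding vec_eq_iff forall_2
      apply (simp add: matrix_matrix_mult_def sum_2 S_def Dm_def)
      apply (intro conjI)
      apply (use cp1 cp2 in algebra)+
      done
    ultimately show ?thesis by blast
  next
    case 2
    define S where "S = (vector [vector [l1 - M$2$2, l2 - M$2$2], vector [M$2$1, M$2$1]] :: complex^2^2)"
    have "det S = M$2$1 * (l1 - l2)" by (simp add: S_def det_2 algebra_simps)
    hence "det S \<noteq> 0" using 2 ne by simp
    moreover have "M ** S = S ** Dm l1 l2"
      unfolding vec_eq_iff forall_2
      apply (simp add: matrix_matrix_mult_def sum_2 S_def Dm_def)
      apply (intro conjI)
      apply (use cp1 cp2 2 in algebra)+
      done
    ultimately show ?thesis by blast
  next
    case 3
    have "(l1 - M$1$1) * (l1 - M$2$2) = 0" using cp1 3 by algebra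
    hence "l1 = M$1$1 \<or> l1 = M$2$2" by simp
    thus ?thesis
    proof
      assume h: "l1 = M$1$1"
      hence h2: "l2 = M$2$2" using tr by simp
      have "det (mat 1 :: complex^2^2) \<noteq> 0" by simp
      moreover have "M ** mat 1 = mat 1 ** Dm l1 l2"
        unfolding vec_eq_iff forall_2 using 3 h h2
        by (simp add: matrix_matrix_mult_def sum_2 Dm_def mat_def)
      ultimately show ?thesis by blast
    next
      assume h: "l1 = M$2$2"
      hence h2: "l2 = M$1$1" using tr by simp
      define S where "S = (vector [vector [0, 1], vector [1, 0]] :: complex^2^2)"
      have "det S \<noteq> 0" by (simp add: S_def det_2)
      moreover have "M ** S = S ** Dm l1 l2"
        unfolding vec_eq_iff forall_2 using 3 h h2
        by (simp add: matrix_matrix_mult_def sum_2 Dm_def S_def)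
      ultimately show ?thesis by blast
    qed
  qed
qed

lemma matc_entry: "(mat c ** (X::complex^2^2))$i$j = c * X$i$j"
  using exhaust_2[of i] by (auto simp: matrix_matrix_mult_def sum_2 mat_def)

lemma good_tau:
  assumes abgd: "al*be*ga*de \<noteq> 0" and sgd: "al*de + be*ga \<noteq> 0" and nd: "al*de - be*ga \<noteq> 0"
    and c1: "c2z P1" and c2: "c2z P2" and A1: "Am P1 \<noteq> 0" and A2: "Am P2 \<noteq> 0"
    and idn: "al*be*ga*de*(Bm P1 P2)^2 = (al*de+be*ga)^2 * Am P1 * Am P2" and mu: "\<mu> \<noteq> 0"
  shows "GG \<mu> P1 P2 \<in> cone_orbit (FF al be ga de)"
proof -
  have nz: "al \<noteq> 0" "be \<noteq> 0" "ga \<noteq> 0" "de \<noteq> 0" using abgd by auto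
  define T1 where "T1 = tl2 P1"
  define T2 where "T2 = tl2 P2"
  have dT1: "det T1 = Am P1" by (simp add: T1_def tl2_def det_2 Am_def)
  define M0 where "M0 = adj2 T1 ** T2"
  have trM0: "M0$1$1 + M0$2$2 = Bm P1 P2"
    by (simp add: M0_def T1_def T2_def adj2_def tl2_def matrix_matrix_mult_def sum_2 Bm_def algebra_simps)
  have dT2: "det T2 = Am P2" by (simp add: T2_def tl2_def det_2 Am_def)
  have dM0: "det M0 = Am P1 * Am P2"
  proof -
    have "det M0 = det T1 * det T2" by (simp only: M0_def det_mul det_adj2)
    thus ?thesis by (simp only: dT1 dT2)
  qed
  have Bnz: "Bm P1 P2 \<noteq> 0"
  proof
    assume "Bm P1 P2 = 0"
    hence "(al*de+be*ga)^2 * Am P1 * Am P2 = 0" using idn by simp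
    thus False using sgd A1 A2 by simp
  qed
  define k where "k = (al*de+be*ga)/(al*be*Bm P1 P2)"
  have knz: "k \<noteq> 0" using sgd nz Bnz by (simp add: k_def)
  define M where "M = mat k ** M0"
  define l1 where "l1 = ga/al"
  define l2 where "l2 = de/be"
  have ne: "l1 \<noteq> l2"
  proof
    assume "l1 = l2"
    hence "ga*be = de*al" using nz by (simp add: l1_def l2_def field_simps)
    thus False using nd by (simp add: algebra_simps)
  qed
  have tr: "l1 + l2 = M$1$1 + M$2$2"
  proof -
    have "M$1$1 + M$2$2 = k * Bm P1 P2" by (simp add: M_def matc_entry trM0[symmetric] algebra_simps)
    also have "\<dots> = (al*de+be*ga)/(al*be)" using Bnz nz by (simp add: k_def)
    also have "\<dots> = l1 + l2" using nz by (simp add: l1_def l2_def field_simps)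
    finally show ?thesis ..
  qed
  have dt: "l1 * l2 = det M"
  proof -
    have dmk: "det (mat k :: complex^2^2) = k^2" by (simp add: det_2 mat_def power2_eq_square)
    have "det M = det (mat k :: complex^2^2) * det M0" by (simp only: M_def det_mul)
    hence "det M = k^2 * (Am P1 * Am P2)" by (simp only: dmk dM0)
    also have "\<dots> = (al*de+be*ga)^2 * Am P1 * Am P2 / (al*be*Bm P1 P2)^2"
      by (simp add: k_def power_divide)
    also have "\<dots> = al*be*ga*de*(Bm P1 P2)^2 / (al*be*Bm P1 P2)^2" by (simp add: idn)
    also have "\<dots> = l1 * l2" using nz Bnz by (simp add: l1_def l2_def power2_eq_square field_simps)
    finally show ?thesis ..
  qed
  obtain S where S: "det S \<noteq> 0" "M ** S = S ** Dm l1 l2" using diag2[OF ne tr dt] by blast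
  define K1i where "K1i = (vector [vector [0, 1/al], vector [1/be, 0]] :: complex^2^2)"
  have KK1: "K1i ** Kmat al be = mat 1"
    unfolding vec_eq_iff forall_2 using nz by (simp add: K1i_def Kmat_def matrix_matrix_mult_def sum_2 mat_def)
  have KK2: "K1i ** Kmat ga de = Dm l1 l2"
    unfolding vec_eq_iff forall_2 using nz
    by (simp add: K1i_def Kmat_def matrix_matrix_mult_def sum_2 Dm_def l1_def l2_def)
  define Z where "Z = T1 ** S ** K1i"
  define Y where "Y = adj2 S"
  have TM: "T1 ** M = mat (k * Am P1) ** T2"
    unfolding vec_eq_iff forall_2 M_def M0_def dT1[symmetric]
    by (simp add: matrix_matrix_mult_def sum_2 mat_def adj2_def det_2 T1_def T2_def tl2_def algebra_simps)
  have Z1: "Z ** Kmat al be ** Y = mat (det S) ** T1"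
  proof -
    have "Z ** Kmat al be ** Y = T1 ** (S ** ((K1i ** Kmat al be) ** adj2 S))"
      by (simp add: Z_def Y_def matrix_mul_assoc)
    also have "\<dots> = T1 ** (S ** adj2 S)" by (simp add: KK1)
    also have "\<dots> = T1 ** mat (det S)" by (simp add: S_adj)
    also have "\<dots> = mat (det S) ** T1"
      unfolding vec_eq_iff forall_2 by (simp add: matrix_matrix_mult_def sum_2 mat_def)
    finally show ?thesis .
  qed
  have Z2: "Z ** Kmat ga de ** Y = mat (k * Am P1 * det S) ** T2"
  proof -
    have "Z ** Kmat ga de ** Y = T1 ** ((S ** (K1i ** Kmat ga de)) ** adj2 S)"
      by (simp add: Z_def Y_def matrix_mul_assoc)
    also have "\<dots> = T1 ** ((M ** S) ** adj2 S)" by (simp add: KK2 S(2))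
    also have "\<dots> = (T1 ** M) ** (S ** adj2 S)" by (simp add: matrix_mul_assoc)
    also have "\<dots> = (mat (k * Am P1) ** T2) ** mat (det S)" by (simp add: TM S_adj)
    also have "\<dots> = mat (k * Am P1 * det S) ** T2"
      unfolding vec_eq_iff forall_2 by (simp add: matrix_matrix_mult_def sum_2 mat_def)
    finally show ?thesis .
  qed
  have dK1i: "det K1i \<noteq> 0" using nz by (simp add: K1i_def det_2)
  have dZ: "det (transpose Z) \<noteq> 0" using A1 S(1) dK1i by (simp add: Z_def det_mul dT1)
  have dY: "det (emb3 Y) \<noteq> 0" using S(1) by (simp add: det_emb3 Y_def det_adj2)
  show ?thesis
  proof (rule ORB[OF mu dZ dY])
    show "det S \<noteq> 0" by (rule S(1))
    show "k * Am P1 * det S \<noteq> 0" using knz A1 S(1) by simp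
    show "(1::complex) \<noteq> 0" by simp
    show "(emb3 Y *v y)$2 = 1 * y$2" for y by (simp add: emb3_2)
    show "al * (transpose Z *v x) $ 2 * (emb3 Y *v y) $ 1 + be * (transpose Z *v x) $ 1 * (emb3 Y *v y) $ 3
          = det S * bil P1 x y" for x y
      unfolding bridge Z1 T1_def using c1 by (rule emb2_scal)
    show "ga * (transpose Z *v x) $ 2 * (emb3 Y *v y) $ 1 + de * (transpose Z *v x) $ 1 * (emb3 Y *v y) $ 3
          = k * Am P1 * det S * bil P2 x y" for x y
      unfolding bridge Z2 T2_def using c2 by (rule emb2_scal)
  qed
qed

lemma good_taup:
  assumes c1: "c2z P1" and c2: "c2z P2" and A1: "Am P1 = 0" and A2: "Am P2 = 0"
    and Bnz: "Bm P1 P2 \<noteq> 0" and mu: "\<mu> \<noteq> 0"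
  shows "GG \<mu> P1 P2 \<in> cone_orbit (FF 1 0 0 1)"
proof -
  obtain u1 u2 v1 v2 where uv: "P1$1$1 = u1 * v1" "P1$1$3 = u1 * v2" "P1$2$1 = u2 * v1" "P1$2$3 = u2 * v2"
    using rank1[where p="P1$1$1" and q="P1$1$3" and r="P1$2$1" and t="P1$2$3"] A1 unfolding Am_def by blast
  obtain w1 w2 z1 z2 where wz: "P2$1$1 = w1 * z1" "P2$1$3 = w1 * z2" "P2$2$1 = w2 * z1" "P2$2$3 = w2 * z2"
    using rank1[where p="P2$1$1" and q="P2$1$3" and r="P2$2$1" and t="P2$2$3"] A2 unfolding Am_def by blast
  have Bf: "Bm P1 P2 = (u1*w2 - w1*u2) * (v1*z2 - v2*z1)"
    unfolding Bm_def uv wz by (simp add: algebra_simps)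
  define A0 where "A0 = (vector [vector [w1, w2], vector [u1, u2]] :: complex^2^2)"
  define B0 where "B0 = (vector [vector [v1, 0, v2], vector [0, 1, 0], vector [z1, 0, z2]] :: complex^3^3)"
  have f1: "u1*w2 - w1*u2 \<noteq> 0" and f2: "v1*z2 - v2*z1 \<noteq> 0" using Bnz unfolding Bf by auto
  have "det A0 = - (u1*w2 - w1*u2)" by (simp add: A0_def det_2 algebra_simps)
  hence dA: "det A0 \<noteq> 0" using f1 by simp
  have "det B0 = v1*z2 - v2*z1" by (simp add: B0_def det_3 algebra_simps)
  hence dB: "det B0 \<noteq> 0" using f2 by simp
  show ?thesis
  proof (rule ORB[OF mu dA dB])
    show "(1::complex) \<noteq> 0" by simp
    show "(1::complex) \<noteq> 0" by simp
    show "(1::complex) \<noteq> 0" by simp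
    show "(B0 *v y)$2 = 1 * y$2" for y by (simp add: B0_def mv3)
    show "1 * (A0 *v x) $ 2 * (B0 *v y) $ 1 + 0 * (A0 *v x) $ 1 * (B0 *v y) $ 3 = 1 * bil P1 x y" for x y
      using c1 by (simp add: A0_def B0_def mv2 mv3 bil_c2z uv algebra_simps)
    show "0 * (A0 *v x) $ 2 * (B0 *v y) $ 1 + 1 * (A0 *v x) $ 1 * (B0 *v y) $ 3 = 1 * bil P2 x y" for x y
      using c2 by (simp add: A0_def B0_def mv2 mv3 bil_c2z wz algebra_simps)
  qed
qed

lemma GG_sym: "GG \<mu> P2 P1 = GG \<mu> P1 P2" by (simp add: GG_def fun_eq_iff mult_ac)
lemma Bm_sym: "Bm P2 P1 = Bm P1 P2" by (simp add: Bm_def algebra_simps)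

lemma fin_tau:
  assumes abgd: "al*be*ga*de \<noteq> 0" and sgd: "al*de + be*ga \<noteq> 0" and nd: "al*de - be*ga \<noteq> 0"
    and mu: "\<mu> \<noteq> 0" and c1: "c2z P1" and c2: "c2z P2" and cc: "CC al be ga de P1 P2"
    and ssG: "ss (GG \<mu> P1 P2)"
  shows "GG \<mu> P1 P2 \<in> cone_orbit (FF al be ga de)"
proof -
  have idn: "al*be*ga*de*(Bm P1 P2)^2 = (al*de+be*ga)^2 * Am P1 * Am P2"
    using CC_consequences(1)[OF cc c1 c2] .
  show ?thesis
  proof (cases "Am P1 = 0 \<or> Am P2 = 0")
    case True
    hence "al*be*ga*de*(Bm P1 P2)^2 = 0" using idn by auto
    hence B0: "Bm P1 P2 = 0" using abgd by simp
    from True show ?thesis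
    proof
      assume "Am P1 = 0"
      hence "\<not> ss (GG \<mu> P1 P2)" using DN[OF c1 c2 _ B0] by blast
      with ssG show ?thesis by contradiction
    next
      assume "Am P2 = 0"
      hence "\<not> ss (GG \<mu> P2 P1)" using DN[OF c2 c1 _] B0 Bm_sym by metis
      with ssG GG_sym show ?thesis by metis
    qed
  next
    case False
    thus ?thesis using good_tau[OF abgd sgd nd c1 c2 _ _ idn mu] by blast
  qed
qed

lemma fin_taup:
  assumes mu: "\<mu> \<noteq> 0" and c1: "c2z P1" and c2: "c2z P2" and cc: "CC 1 0 0 1 P1 P2"
    and ssG: "ss (GG \<mu> P1 P2)"
  shows "GG \<mu> P1 P2 \<in> cone_orbit (FF 1 0 0 1)"
proof -
  have A1: "Am P1 = 0" using CC_consequences(2)[OF cc c1 c2] by simp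
  have A2: "Am P2 = 0" using CC_consequences(3)[OF cc c1 c2] by simp
  show ?thesis
  proof (cases "Bm P1 P2 = 0")
    case True
    hence "\<not> ss (GG \<mu> P1 P2)" using DN[OF c1 c2 A1] by blast
    with ssG show ?thesis by contradiction
  next
    case False
    thus ?thesis by (rule good_taup[OF c1 c2 A1 A2 _ mu])
  qed
qed

lemma closed_FF:
  assumes nd: "al*de - be*ga \<noteq> 0"
    and fin: "\<And>\<mu> P1 P2. \<mu> \<noteq> 0 \<Longrightarrow> c2z P1 \<Longrightarrow> c2z P2 \<Longrightarrow> CC al be ga de P1 P2 \<Longrightarrow>
        ss (GG \<mu> P1 P2) \<Longrightarrow> GG \<mu> P1 P2 \<in> cone_orbit (FF al be ga de)"
  shows "closed_orbit (FF al be ga de)"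
  unfolding closed_orbit_def
proof (intro allI impI, elim conjE)
  fix H assume sH: "semistable H" and cl: "in_closure H (cone_orbit (FF al be ga de))"
  have ssH: "ss H" and Hnz: "H \<noteq> (\<lambda>x y. 0)" using sH unfolding semistable_def ss_def by auto
  obtain \<mu> m N1 N2 w where p: "\<mu> \<noteq> 0" "w \<noteq> 0" "N1 *v w = 0" "N2 *v w = 0" "CC al be ga de N1 N2"
      "\<forall>x y. H x y = \<mu> * dotv m y * bil N1 x y * bil N2 x y"
    using pipeline[OF nd cl Hnz] by blast
  have Hrep: "\<And>x y. H x y = \<mu> * dotv m y * bil N1 x y * bil N2 x y" using p(6) by blast
  obtain B P1 P2 where nf: "det B = 1" "\<forall>j. P1$j$2 = 0" "\<forall>j. P2$j$2 = 0" "CC al be ga de P1 P2"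
      "act (mat 1) B H = (\<lambda>x y. \<mu> * y$2 * bil P1 x y * bil P2 x y)"
    using normal_form[OF Hrep p(2) p(3) p(4) p(5) ssH] by blast
  have G: "act (mat 1) B H = GG \<mu> P1 P2" using nf(5) by (simp add: GG_def)
  have "ss (act (mat 1) B H)" by (rule ss_act[OF ssH]) (simp_all add: nf(1))
  hence ssG: "ss (GG \<mu> P1 P2)" unfolding G .
  have c1: "c2z P1" "c2z P2" using nf(2,3) by (simp_all add: c2z_def)
  have "act (mat 1) B H \<in> cone_orbit (FF al be ga de)"
    unfolding G using fin[OF p(1) c1 nf(4) ssG] .
  thus "H \<in> cone_orbit (FF al be ga de)" using cone_act_back[of "mat 1" B H] nf(1) by simp
qed

lemma form23_tau: "form23 (tau a1 a2 a3)"
proof -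
  define c where "c i a b = (if i = 0 \<and> a = 2 \<and> b = 1 then a1 else if i = 1 \<and> a = 1 \<and> b = 1 then a2
      else if i = 2 \<and> a = 0 \<and> b = 1 then a3 else 0)" for i a b :: nat
  have "tau a1 a2 a3 = (\<lambda>x y. \<Sum>i\<le>2. \<Sum>a\<le>3. \<Sum>b\<le>3 - a.
            c i a b * x$1 ^ i * x$2 ^ (2 - i) * y$1 ^ a * y$2 ^ b * y$3 ^ (3 - a - b))"
    by (simp add: fun_eq_iff tau_def c_def eval_nat_numeral atMost_Suc algebra_simps)
  thus ?thesis unfolding form23_def by blast
qed

lemma tau_FF:
  assumes a1: "a1 \<noteq> 0" and hs: "s^2 = a2^2 - 4*a1*a3"
  shows "tau a1 a2 a3 = FF 1 ((a2+s)/(2*a1)) a1 ((a2-s)/2)"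
proof -
  define b where "b = (a2+s)/(2*a1)"
  define d where "d = (a2-s)/2"
  have e1: "a2 = d + b*a1" using a1 by (simp add: b_def d_def field_simps)
  have "(a2+s)*(a2-s) = 4*a1*a3" using hs by (simp add: power2_eq_square algebra_simps)
  hence e2: "a3 = b*d" using a1 by (simp add: b_def d_def field_simps)
  show ?thesis unfolding b_def[symmetric] d_def[symmetric]
    by (simp add: fun_eq_iff tau_def FF_def e1 e2 power2_eq_square algebra_simps)
qed

lemma tau'_FF: "tau' = FF 1 0 0 1"
  by (simp add: fun_eq_iff tau'_def FF_def algebra_simps)

lemma tau'_tau: "tau' = tau 0 1 0"
  by (simp add: fun_eq_iff tau'_def tau_def algebra_simps)

lemma generic_part:
  assumes h: "a1 * a2 * a3 * (a2^2 - 4*a1*a3) \<noteq> 0"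
  shows "semistable (tau a1 a2 a3) \<and> closed_orbit (tau a1 a2 a3)"
proof -
  have nz: "a1 \<noteq> 0" "a2 \<noteq> 0" "a3 \<noteq> 0" "a2^2 - 4*a1*a3 \<noteq> 0" using h by auto
  define s where "s = csqrt (a2^2 - 4*a1*a3)"
  have hs: "s^2 = a2^2 - 4*a1*a3" by (simp add: s_def)
  have snz: "s \<noteq> 0" using hs nz(4) by auto
  define b where "b = (a2+s)/(2*a1)"
  define d where "d = (a2-s)/2"
  have T: "tau a1 a2 a3 = FF 1 b a1 d" unfolding b_def d_def by (rule tau_FF[OF nz(1) hs])
  have bd: "b*d = a3" "d + b*a1 = a2"
  proof -
    have "(a2+s)*(a2-s) = 4*a1*a3" using hs by (simp add: power2_eq_square algebra_simps)
    thus "b*d = a3" using nz(1) by (simp add: b_def d_def field_simps)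
    show "d + b*a1 = a2" using nz(1) by (simp add: b_def d_def field_simps)
  qed
  have c1: "1*b*a1*d \<noteq> 0" using bd nz by (simp add: mult_ac)
  have c2: "1*d + b*a1 \<noteq> 0" using bd nz by simp
  have c3: "1*d - b*a1 \<noteq> 0"
  proof -
    have "1*d - b*a1 = - s" using nz(1) by (simp add: b_def d_def field_simps)
    thus ?thesis using snz by simp
  qed
  have ne: "tau a1 a2 a3 \<noteq> (\<lambda>x y. 0)"
  proof
    assume "tau a1 a2 a3 = (\<lambda>x y. 0)"
    hence "tau a1 a2 a3 (vector [0,1]) (vector [1,1,0]) = 0" by simp
    thus False using nz(1) by (simp add: tau_def)
  qed
  have ssT: "ss (tau a1 a2 a3)" using ss_FF[OF c3] T by simp
  have "semistable (tau a1 a2 a3)"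
    using form23_tau ne ssT unfolding semistable_def ss_def by blast
  moreover have "closed_orbit (tau a1 a2 a3)"
    unfolding T by (rule closed_FF[OF c3 fin_tau[OF c1 c2 c3]])
  ultimately show ?thesis ..
qed

lemma taup_part: "semistable tau' \<and> closed_orbit tau'"
proof -
  have nd: "(1::complex)*1 - 0*0 \<noteq> 0" by simp
  have ne: "tau' \<noteq> (\<lambda>x y. 0)"
  proof
    assume z: "tau' = (\<lambda>x y. 0)"
    have "tau' (vector [1,1]) (vector [1,1,1]) = 0" using fun_cong[OF fun_cong[OF z]] by simp
    thus False by (simp add: tau'_def)
  qed
  have ssT: "ss tau'" using ss_FF[OF nd] tau'_FF by simp
  have f23: "form23 tau'" using form23_tau[of 0 1 0] tau'_tau by simp
  have "semistable tau'"
    using f23 ne ssT unfolding semistable_def ss_def by blast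
  moreover have "closed_orbit tau'"
    unfolding tau'_FF by (rule closed_FF[OF nd fin_taup])
  ultimately show ?thesis ..
qed

lemma generic_poly:
  "(\<Sum>i\<le>3. \<Sum>j\<le>3. \<Sum>k\<le>3. (if i = 1 \<and> j = 3 \<and> k = 1 then 1 else if i = 2 \<and> j = 1 \<and> k = 2 then -4 else 0)
      * a1 ^ i * a2 ^ j * a3 ^ k) = a1 * a2 * a3 * (a2^2 - 4*a1*(a3::complex))"
  by (simp add: eval_nat_numeral atMost_Suc algebra_simps)

theorem lemma5p3:
  shows "generic3 (\<lambda>a1 a2 a3. semistable (tau a1 a2 a3) \<and> closed_orbit (tau a1 a2 a3))
         \<and> semistable tau' \<and> closed_orbit tau'"
proof -
  define p where "p i j k = (if i = 1 \<and> j = 3 \<and> k = 1 then 1 else if i = 2 \<and> j = 1 \<and> k = 2 then -4 else (0::complex))"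
    for i j k :: nat
  have "generic3 (\<lambda>a1 a2 a3. semistable (tau a1 a2 a3) \<and> closed_orbit (tau a1 a2 a3))"
    unfolding generic3_def
  proof (rule exI[of _ p], rule exI[of _ 3], intro conjI)
    show "\<exists>i j k. p i j k \<noteq> 0" by (rule exI[of _ 1], rule exI[of _ 3], rule exI[of _ 1]) (simp add: p_def)
    show "\<forall>i j k. p i j k \<noteq> 0 \<longrightarrow> i \<le> 3 \<and> j \<le> 3 \<and> k \<le> 3"
      by (auto simp: p_def split: if_splits)
    show "\<forall>a1 a2 a3. (\<Sum>i\<le>3. \<Sum>j\<le>3. \<Sum>k\<le>3. p i j k * a1 ^ i * a2 ^ j * a3 ^ k) \<noteq> 0 \<longrightarrow>
        semistable (tau a1 a2 a3) \<and> closed_orbit (tau a1 a2 a3)"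
    proof (intro allI impI)
      fix a1 a2 a3
      assume "(\<Sum>i\<le>3. \<Sum>j\<le>3. \<Sum>k\<le>3. p i j k * a1 ^ i * a2 ^ j * a3 ^ k) \<noteq> 0"
      hence "a1 * a2 * a3 * (a2^2 - 4*a1*a3) \<noteq> 0" unfolding p_def generic_poly .
      thus "semistable (tau a1 a2 a3) \<and> closed_orbit (tau a1 a2 a3)" by (rule generic_part)
    qed
  qed
  thus ?thesis using taup_part by blast
qed

end
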